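(* Assume the composite setting below with conditions (G1), (G2) and (D). Apply Algorithm TR to $f(u)=J(S(u),u)$ with the model function $\phi$ defined below, and suppose there is $C_H>0$ with $\|H_k\|\le C_H$ for all $k$. If the algorithm does not terminate after finitely many iterations, then every accumulation point $\bar u$ of the iterates is C-stationary, i.e. $0\in\partial f(\bar u)$.
   Context: Composite setting: $J:\mathbb{R}^m\times\mathbb{R}^n\to\mathbb{R}$ continuously differentiable; $S:\mathbb{R}^n\to\mathbb{R}^m$ locally Lipschitz continuous and directionally differentiable (directional derivative $S'(u;h)$); $f(u):=J(S(u),u)$. $\partial_B S(u)$ is the Bouligand subdifferential: all limits $\lim_j S'(u_j)$ with $u_j\to u$ and $S$ differentiable at $u_j$. $\partial f(u)$ is the Clarke subdifferential of $f$. $B_r(x)$ is the closed Euclidean ball; $\|\cdot\|$ is the Euclidean/spectral norm; $a/0:=+\infty$ in minima. For each $u\in\mathbb{R}^n$, $\Delta>0$ let $\mathcal G(u,\Delta)\subset\mathbb{R}^{m\times n}$ be a nonempty bounded set, and define the model $\phi(u,\Delta;d):=\sup_{G\in\mathcal G(u,\Delta)}\langle G^\top\nabla_yJ(S(u),u)+\nabla_uJ(S(u),u),d\rangle$ and $\psi(u,\Delta):=-\min_{\|h\|\le1}\phi(u,\Delta;h)$. Conditions: (G1) $\bigcup_{\xi\in B_\Delta(u)}\partial_BS(\xi)\subseteq\mathcal G(u,\Delta)$ for all $u$, $\Delta>0$; (G2) if $(u_k,\Delta_k)\to(u,0)$ with $0\notin\partial f(u)$, then $\sup_{G\in\mathcal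 G(u_k,\Delta_k)}\inf_{W\in\partial_BS(u)}\|G-W\|\to0$; (D) for all $u,h\in\mathbb{R}^n$ there is $G\in\partial_BS(u)$ with $S'(u;h)=Gh$. Algorithm TR: choose $\Delta_{\min}>0$, $0<\eta_1<\eta_2<1$, $0<\beta_1<1<\beta_2$, $0<\mu\le1$, $u_0$, $\Delta_0>\Delta_{\min}$. For $k=0,1,\dots$: choose $g_k\in\partial f(u_k)$ and symmetric $H_k$. If $g_k=0$ stop. If $\Delta_k\ge\Delta_{\min}$: choose $d_k$ with $\|d_k\|\le\Delta_k$ and $f(u_k)-q_k(d_k)\ge\frac{\mu}{2}\|g_k\|\min\{\Delta_k,\|g_k\|/\|H_k\|\}$, $q_k(d)=f(u_k)+\langle g_k,d\rangle+\frac12d^\top H_kd$, and $\rho_k=\frac{f(u_k)-f(u_k+d_k)}{f(u_k)-q_k(d_k)}$. If $\Delta_k<\Delta_{\min}$: with $\psi_k=\psi(u_k,\Delta_k)$ choose $d_k$ with $\|d_k\|\le\Delta_k$ and $f(u_k)-\tilde q_k(d_k)\ge\frac{\mu}{2}\psi_k\min\{\Delta_k,\psi_k/\|H_k\|\}$, $\tilde q_k(d)=f(u_k)+\phi(u_k,\Delta_k;d)+\frac12d^\top H_kd$, and $\rho_k=\frac{f(u_k)-f(u_k+d_k)}{f(u_k)-\tilde q_k(d_k)}$ if $\psi_k>\|g_k\|\Delta_k$, $\rho_k=0$ otherwise. Update: $u_{k+1}=u_k$ if $\rho_k\le\eta_1$, else $u_{k+1}=u_k+d_k$; $\Delta_{k+1}=\beta_1\Delta_k$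 if $\rho_k\le\eta_1$, $\max\{\Delta_{\min},\Delta_k\}$ if $\eta_1<\rho_k\le\eta_2$, $\max\{\Delta_{\min},\beta_2\Delta_k\}$ if $\rho_k>\eta_2$. *)

theory Defs
  imports "HOL-Analysis.Analysis"
begin

definition mnorm :: "real^'n^'m \<Rightarrow> real" where
  "mnorm A = onorm (\<lambda>x. A *v x)"

definition bouligand :: "(real^'n \<Rightarrow> real^'m) \<Rightarrow> real^'n \<Rightarrow> (real^'n^'m) set" where
  "bouligand S u = {W. \<exists>x :: nat \<Rightarrow> real^'n. \<exists>Wj :: nat \<Rightarrow> real^'n^'m.
      x \<longlonglongrightarrow> u \<and> (\<forall>j. (S has_derivative (\<lambda>h. Wj j *v h)) (at (x j))) \<and> Wj \<longlonglongrightarrow> W}"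

definition clarke_dd :: "(real^'n \<Rightarrow> real) \<Rightarrow> real^'n \<Rightarrow> real^'n \<Rightarrow> ereal" where
  "clarke_dd f u h = Limsup (at (u, 0) within (UNIV \<times> {0<..}))
      (\<lambda>(y, t). ereal ((f (y + t *\<^sub>R h) - f y) / t))"

definition clarke_subdiff :: "(real^'n \<Rightarrow> real) \<Rightarrow> real^'n \<Rightarrow> (real^'n) set" where
  "clarke_subdiff f u = {g. \<forall>h. ereal (g \<bullet> h) \<le> clarke_dd f u h}"

text \<open>Convention a/0 = +infinity inside min{D, a/b}.\<close>
definition min_div :: "real \<Rightarrow> real \<Rightarrow> real \<Rightarrow> real" where
  "min_div D a b = (if b = 0 then D else min D (a / b))"

text \<open>Model function phi(u,Delta;d) and psi(u,Delta).  Jy, Ju are the partial gradients of J.\<close>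
definition model_phi ::
  "(real^'n \<Rightarrow> real \<Rightarrow> (real^'n^'m) set) \<Rightarrow> (real^'n \<Rightarrow> real^'m)
   \<Rightarrow> ((real^'m) \<times> (real^'n) \<Rightarrow> real^'m) \<Rightarrow> ((real^'m) \<times> (real^'n) \<Rightarrow> real^'n)
   \<Rightarrow> real^'n \<Rightarrow> real \<Rightarrow> real^'n \<Rightarrow> real" where
  "model_phi Gs S Jy Ju u D d =
     (SUP G\<in>Gs u D. (transpose G *v Jy (S u, u) + Ju (S u, u)) \<bullet> d)"

definition model_psi ::
  "(real^'n \<Rightarrow> real \<Rightarrow> (real^'n^'m) set) \<Rightarrow> (real^'n \<Rightarrow> real^'m)
   \<Rightarrow> ((real^'m) \<times> (real^'n) \<Rightarrow> real^'m) \<Rightarrow> ((real^'m) \<times> (real^'n) \<Rightarrow> real^'n)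
   \<Rightarrow> real^'n \<Rightarrow> real \<Rightarrow> real" where
  "model_psi Gs S Jy Ju u D = - (INF h\<in>cball 0 1. model_phi Gs S Jy Ju u D h)"

end

theory Submission
  imports Defs
begin

lemma Limsup_ge_seq:
  fixes g :: "'a \<Rightarrow> ereal"
  assumes X: "filterlim X F sequentially" and a: "\<And>j. ereal (a j) \<le> g (X j)" and ac: "a \<longlonglongrightarrow> c"
  shows "ereal c \<le> Limsup F g"
proof (rule Limsup_greatest)
  fix P assume "eventually P F"
  then have ev: "eventually (\<lambda>j. P (X j)) sequentially" using X by (simp add: filterlim_iff)
  have "eventually (\<lambda>j. ereal (a j) \<le> (SUP x\<in>Collect P. g x)) sequentially"
    using ev by eventually_elim (metis a SUP_upper mem_Collect_eq order_trans)
  moreover have "(\<lambda>j. ereal (a j)) \<longlonglongrightarrow> ereal c" using ac by simp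
  ultimately show "ereal c \<le> (SUP x\<in>Collect P. g x)"
    by (intro tendsto_le[OF trivial_limit_sequentially tendsto_const]) auto
qed

lemma less_Limsup_frequently:
  fixes f :: "'a \<Rightarrow> 'b::complete_linorder"
  assumes "y < Limsup F f" shows "\<exists>\<^sub>F x in F. y < f x"
proof (rule ccontr)
  assume "\<not> (\<exists>\<^sub>F x in F. y < f x)"
  then have "eventually (\<lambda>x. f x \<le> y) F" by (simp add: not_frequently not_less)
  then have "Limsup F f \<le> y" by (rule Limsup_bounded)
  with assms show False by simp
qed

definition cq :: "(real^'n \<Rightarrow> real) \<Rightarrow> real^'n \<Rightarrow> (real^'n) \<times> real \<Rightarrow> real" where
  "cq f h p = (f (fst p + snd p *\<^sub>R h) - f (fst p)) / snd p"

lemma clarke_dd_cq: "clarke_dd f u h = Limsup (at (u, 0) within (UNIV \<times> {0<..})) (\<lambda>p. ereal (cq f h p))"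
  unfolding clarke_dd_def cq_def case_prod_unfold by (rule refl)

lemma clarke_ge_seq:
  assumes y: "y \<longlonglongrightarrow> u" and t: "t \<longlonglongrightarrow> 0" and tpos: "\<And>j. t j > 0"
    and a: "\<And>j. a j \<le> (f (y j + t j *\<^sub>R h) - f (y j)) / t j" and ac: "a \<longlonglongrightarrow> c"
  shows "ereal c \<le> clarke_dd f u h"
  unfolding clarke_dd_cq
proof (rule Limsup_ge_seq[where X="\<lambda>j. (y j, t j)" and a=a])
  show "filterlim (\<lambda>j. (y j, t j)) (at (u, 0) within UNIV \<times> {0<..}) sequentially"
    unfolding filterlim_at using y t tpos by (auto intro!: tendsto_Pair always_eventually simp: less_imp_neq[symmetric])
  show "ereal (a j) \<le> ereal (cq f h (y j, t j))" for j using a[of j] by (simp add: cq_def)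
qed fact

lemma clarke_usc:
  assumes x: "x \<longlonglongrightarrow> x0" and c: "\<And>j. ereal (c j) \<le> clarke_dd f (x j) h" and cc: "c \<longlonglongrightarrow> c0"
  shows "ereal c0 \<le> clarke_dd f x0 h"
proof -
  define e where "e j = 1 / (real j + 1)" for j
  have epos: "e j > 0" for j by (simp add: e_def)
  have e0: "e \<longlonglongrightarrow> 0" unfolding e_def using LIMSEQ_inverse_real_of_nat by (simp add: inverse_eq_divide add.commute)
  have "\<exists>p. p \<in> UNIV \<times> {0<..} \<and> dist p (x j, 0) < e j \<and> c j - e j < cq f h p" for j
  proof -
    have "ereal (c j - e j) < clarke_dd f (x j) h" using c[of j] epos[of j]
    proof -
      have "ereal (c j - e j) < ereal (c j)" using epos[of j] by simp
      then show ?thesis using c[of j] by (rule order_less_le_trans)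
    qed
    then have "\<exists>\<^sub>F p in at (x j, 0) within UNIV \<times> {0<..}. ereal (c j - e j) < ereal (cq f h p)"
      unfolding clarke_dd_cq by (rule less_Limsup_frequently)
    then show ?thesis unfolding frequently_at using epos[of j] by force
  qed
  then obtain p where p: "\<And>j. p j \<in> UNIV \<times> {0<..} \<and> dist (p j) (x j, 0) < e j \<and> c j - e j < cq f h (p j)"
    by metis
  define y where "y j = fst (p j)" for j
  define t where "t j = snd (p j)" for j
  have tpos: "t j > 0" for j using p[of j] by (auto simp: t_def)
  have d1: "dist (y j) (x j) < e j" for j
    using p[of j] dist_fst_le[of "p j" "(x j, 0)"] by (simp add: y_def)
  have d2: "dist (t j) 0 < e j" for j
    using p[of j] dist_snd_le[of "p j" "(x j, 0)"] by (simp add: t_def)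
  have "(\<lambda>j. y j - x j) \<longlonglongrightarrow> 0"
  proof (rule Lim_null_comparison[OF always_eventually e0], intro allI)
    fix j show "norm (y j - x j) \<le> e j" using d1[of j] by (simp add: dist_norm)
  qed
  then have y: "y \<longlonglongrightarrow> x0"
    using x by (rule Lim_transform[rotated])
  have t: "t \<longlonglongrightarrow> 0"
  proof (rule Lim_null_comparison[OF always_eventually e0], intro allI)
    fix j show "norm (t j) \<le> e j" using d2[of j] by (simp add: dist_norm)
  qed
  show ?thesis
  proof (rule clarke_ge_seq[OF y t tpos])
    show "c j - e j \<le> (f (y j + t j *\<^sub>R h) - f (y j)) / t j" for j
      using p[of j] by (simp add: cq_def y_def t_def)
    show "(\<lambda>j. c j - e j) \<longlonglongrightarrow> c0" using tendsto_diff[OF cc e0] by simp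
  qed
qed

lemma right_quot_has_derivative:
  fixes \<phi> :: "real \<Rightarrow> 'a::real_normed_vector"
  shows "(\<phi> has_derivative (\<lambda>s. s *\<^sub>R v)) (at 0 within {0<..}) \<longleftrightarrow>
         ((\<lambda>t. (\<phi> t - \<phi> 0) /\<^sub>R t) \<longlongrightarrow> v) (at_right 0)"
proof -
  have ev: "eventually (\<lambda>y. ((\<phi> y - \<phi> 0) - (y - 0) *\<^sub>R v) /\<^sub>R norm (y - 0)
        = (\<phi> y - \<phi> 0) /\<^sub>R y - v) (at_right (0::real))"
    using eventually_at_right_less[of "0::real"]
  proof (rule eventually_mono)
    fix y :: real assume "0 < y"
    then show "((\<phi> y - \<phi> 0) - (y - 0) *\<^sub>R v) /\<^sub>R norm (y - 0) = (\<phi> y - \<phi> 0) /\<^sub>R y - v"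
      by (simp add: scaleR_diff_right)
  qed
  have "((\<lambda>y. ((\<phi> y - \<phi> 0) - (y - 0) *\<^sub>R v) /\<^sub>R norm (y - 0)) \<longlongrightarrow> 0) (at_right 0)
      \<longleftrightarrow> ((\<lambda>y. (\<phi> y - \<phi> 0) /\<^sub>R y - v) \<longlongrightarrow> 0) (at_right 0)"
    by (rule tendsto_cong[OF ev])
  then show ?thesis
    by (simp add: has_derivative_at_within LIM_zero_iff bounded_linear_scaleR_left)
qed

lemma comp_dirderiv:
  fixes J :: "(real^'m) \<times> (real^'n) \<Rightarrow> real"
    and S :: "real^'n \<Rightarrow> real^'m"
  assumes J_deriv: "(J has_derivative (\<lambda>(dy, du). Jy \<bullet> dy + Ju \<bullet> du)) (at (S x, x))"
    and Sq: "((\<lambda>t. (S (x + t *\<^sub>R d) - S x) /\<^sub>R t) \<longlongrightarrow> v) (at_right 0)"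
  shows "((\<lambda>t. (J (S (x + t *\<^sub>R d), x + t *\<^sub>R d) - J (S x, x)) / t) \<longlongrightarrow> Jy \<bullet> v + Ju \<bullet> d) (at_right 0)"
proof -
  define \<gamma> where "\<gamma> t = (S (x + t *\<^sub>R d), x + t *\<^sub>R d)" for t :: real
  have g0: "\<gamma> 0 = (S x, x)" by (simp add: \<gamma>_def)
  have S1: "((\<lambda>t. S (x + t *\<^sub>R d)) has_derivative (\<lambda>s. s *\<^sub>R v)) (at 0 within {0<..})"
    using Sq by (subst right_quot_has_derivative) simp
  have S2: "((\<lambda>t. x + t *\<^sub>R d) has_derivative (\<lambda>s. s *\<^sub>R d)) (at 0 within {0<..})"
    by (auto intro!: derivative_eq_intros)
  have G: "(\<gamma> has_derivative (\<lambda>s. s *\<^sub>R (v, d))) (at 0 within {0<..})"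
    unfolding \<gamma>_def using has_derivative_Pair[OF S1 S2] by simp
  have J': "(J has_derivative (\<lambda>(dy, du). Jy \<bullet> dy + Ju \<bullet> du)) (at (\<gamma> 0) within \<gamma> ` {0<..})"
    using has_derivative_at_withinI[OF J_deriv] g0 by simp
  have C: "(J \<circ> \<gamma> has_derivative (\<lambda>s. s *\<^sub>R (Jy \<bullet> v + Ju \<bullet> d))) (at 0 within {0<..})"
    using diff_chain_within[OF G J'] by (simp add: o_def inner_scaleR_right algebra_simps)
  then have "((\<lambda>t. ((J \<circ> \<gamma>) t - (J \<circ> \<gamma>) 0) /\<^sub>R t) \<longlongrightarrow> Jy \<bullet> v + Ju \<bullet> d) (at_right 0)"
    by (subst (asm) right_quot_has_derivative)
  then show ?thesis by (simp add: \<gamma>_def divide_inverse mult.commute)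
qed

lemma right_mvt:
  fixes h :: "real \<Rightarrow> real"
  assumes cont: "continuous_on {0..1} h"
    and der: "\<And>t. 0 \<le> t \<Longrightarrow> t < 1 \<Longrightarrow> \<exists>D. ((\<lambda>s. (h (t + s) - h t) / s) \<longlongrightarrow> D) (at_right 0) \<and> D \<le> M"
  shows "h 1 - h 0 \<le> M"
proof (rule field_le_epsilon)
  fix e :: real assume e: "0 < e"
  define A where "A = {t \<in> {0..1}. h t - h 0 \<le> (M + e) * t}"
  have cA: "closed A" unfolding A_def
    by (rule continuous_on_closed_Collect_le) (auto intro!: continuous_intros cont)
  have A0: "0 \<in> A" by (simp add: A_def)
  have bA: "bdd_above A" by (auto simp: A_def bdd_above_def)
  define s where "s = Sup A"
  have sA: "s \<in> A" unfolding s_def using closed_contains_Sup[OF _ bA cA] A0 by blast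
  have s1: "s = 1"
  proof (rule ccontr)
    assume "s \<noteq> 1"
    with sA have s1: "0 \<le> s" "s < 1" by (auto simp: A_def)
    obtain D where D: "((\<lambda>\<sigma>. (h (s + \<sigma>) - h s) / \<sigma>) \<longlongrightarrow> D) (at_right 0)" "D \<le> M"
      using der[OF s1] by blast
    have "eventually (\<lambda>\<sigma>. (h (s + \<sigma>) - h s) / \<sigma> < M + e) (at_right 0)"
      using order_tendstoD(2)[OF D(1)] D(2) e by simp
    then obtain b where b: "b > 0" "\<And>\<sigma>. \<sigma> > 0 \<Longrightarrow> \<sigma> < b \<Longrightarrow> (h (s + \<sigma>) - h s) / \<sigma> < M + e"
      unfolding eventually_at_right_field by auto
    define \<sigma> where "\<sigma> = min (b/2) ((1 - s)/2)"
    have sp0: "\<sigma> \<le> (1 - s)/2" unfolding \<sigma>_def by (rule min.cobounded2)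
    have sp: "\<sigma> > 0" "\<sigma> < b" "s + \<sigma> \<le> 1" using b s1 sp0 by (auto simp: \<sigma>_def)
    have "(h (s + \<sigma>) - h s) / \<sigma> < M + e" using b(2)[OF sp(1,2)] .
    then have q: "h (s + \<sigma>) - h s < (M + e) * \<sigma>" using sp(1) by (simp add: divide_less_eq)
    have "h s - h 0 \<le> (M + e) * s" using sA by (simp add: A_def)
    with q have "h (s + \<sigma>) - h 0 \<le> (M + e) * (s + \<sigma>)" by (simp add: algebra_simps)
    then have "s + \<sigma> \<in> A" using sp s1 by (simp add: A_def)
    then have "s + \<sigma> \<le> s" unfolding s_def by (rule cSup_upper[OF _ bA])
    with sp show False by simp
  qed
  then show "h 1 - h 0 \<le> M + e" using sA by (simp add: A_def)
qed

lemma clarke_subgrad_bound: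
  assumes e: "e > 0" and L0: "L \<ge> 0"
    and L: "\<And>y z. y \<in> ball x e \<Longrightarrow> z \<in> ball x e \<Longrightarrow> \<bar>f y - f z\<bar> \<le> L * norm (y - z)"
    and g: "g \<in> clarke_subdiff f x"
  shows "norm g \<le> L"
proof (cases "g = 0")
  case True then show ?thesis using L0 by simp
next
  case False
  define d where "d = e / (2 * (1 + norm g))"
  have dpos: "d > 0" using e by (simp add: d_def add_pos_nonneg)
  have pos1: "1 + norm g > 0" by (simp add: add_pos_nonneg)
  have de: "d * (1 + norm g) = e / 2" using pos1 unfolding d_def by (simp add: field_simps)
  have "eventually (\<lambda>p. ereal (cq f g p) \<le> ereal (L * norm g)) (at (x, 0) within UNIV \<times> {0<..})"
    unfolding eventually_at
  proof (intro exI[of _ d] conjI dpos ballI impI)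
    fix p :: "(real^'a) \<times> real" assume p: "p \<in> UNIV \<times> {0<..}" "p \<noteq> (x, 0) \<and> dist p (x, 0) < d"
    obtain y t where pyt: "p = (y, t)" by (cases p)
    have t: "t > 0" using p pyt by auto
    have dy: "dist y x < d" using p(2) dist_fst_le[of p "(x,0)"] pyt by simp
    have dt: "t < d" using p(2) dist_snd_le[of p "(x,0)"] pyt t by (simp add: dist_real_def)
    have y: "y \<in> ball x e" using dy de dpos e
      by (simp add: dist_commute) (smt (verit) mult_le_cancel_left1 norm_ge_zero)
    have "dist (y + t *\<^sub>R g) x \<le> dist y x + t * norm g"
      using dist_triangle[of "y + t *\<^sub>R g" x y] t by (simp add: dist_norm)
    also have "\<dots> \<le> d + d * norm g" using dy dt by (intro add_mono mult_right_mono) auto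
    finally have y2: "y + t *\<^sub>R g \<in> ball x e" using de e by (simp add: dist_commute algebra_simps)
    have "f (y + t *\<^sub>R g) - f y \<le> L * norm (t *\<^sub>R g)"
      using L[OF y2 y] by simp
    then have "f (y + t *\<^sub>R g) - f y \<le> t * (L * norm g)" using t by (simp add: algebra_simps)
    then have "(f (y + t *\<^sub>R g) - f y) / t \<le> L * norm g" using t by (simp add: divide_le_eq mult.commute)
    then show "ereal (cq f g p) \<le> ereal (L * norm g)" by (simp add: cq_def pyt)
  qed
  then have "clarke_dd f x g \<le> ereal (L * norm g)" unfolding clarke_dd_cq by (rule Limsup_bounded)
  moreover have "ereal (g \<bullet> g) \<le> clarke_dd f x g" using g by (simp add: clarke_subdiff_def)
  ultimately have "ereal (g \<bullet> g) \<le> ereal (L * norm g)" by (metis order_trans)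
  then have "norm g * norm g \<le> L * norm g" by (simp add: power2_norm_eq_inner[symmetric] power2_eq_square)
  then show ?thesis using False by simp
qed

lemma tendsto_mv:
  fixes A :: "'b \<Rightarrow> real^'n^'m"
  assumes "(A \<longlongrightarrow> A0) F" shows "((\<lambda>x. A x *v v) \<longlongrightarrow> A0 *v v) F"
  unfolding matrix_vector_mult_def
  by (intro tendsto_vec_lambda tendsto_sum tendsto_mult tendsto_vec_nth tendsto_const assms)

lemma hasderiv_dirquot:
  fixes S :: "'a::real_normed_vector \<Rightarrow> 'b::real_normed_vector"
  assumes "(S has_derivative S') (at x)"
  shows "((\<lambda>t. (S (x + t *\<^sub>R h) - S x) /\<^sub>R t) \<longlongrightarrow> S' h) (at_right 0)"
proof -
  have lin: "linear S'" using assms has_derivative_linear by blast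
  have L: "((\<lambda>t. x + t *\<^sub>R h) has_derivative (\<lambda>s. s *\<^sub>R h)) (at 0 within {0<..})"
    by (auto intro!: derivative_eq_intros)
  have "((\<lambda>t. S (x + t *\<^sub>R h)) has_derivative (\<lambda>s. S' (s *\<^sub>R h))) (at 0 within {0<..})"
    using has_derivative_compose[OF L] assms by simp
  then have "((\<lambda>t. S (x + t *\<^sub>R h)) has_derivative (\<lambda>s. s *\<^sub>R S' h)) (at 0 within {0<..})"
    using linear_scale[OF lin] by simp
  then show ?thesis by (subst (asm) right_quot_has_derivative) simp
qed

lemma lip_dirquot_bound:
  fixes S :: "'a::real_normed_vector \<Rightarrow> 'b::real_normed_vector"
  assumes q: "((\<lambda>t. (S (x + t *\<^sub>R h) - S x) /\<^sub>R t) \<longlongrightarrow> v) (at_right 0)"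
    and lip: "L-lipschitz_on U S" and e: "e > 0" and U: "ball x e \<subseteq> U"
  shows "norm v \<le> L * norm h"
proof -
  have pos: "norm h + 1 > 0" by (simp add: add_nonneg_pos)
  have "eventually (\<lambda>t. norm ((S (x + t *\<^sub>R h) - S x) /\<^sub>R t) \<le> L * norm h) (at_right 0)"
    unfolding eventually_at_right_field
  proof (intro exI[of _ "e / (norm h + 1)"] conjI allI impI)
    show "0 < e / (norm h + 1)" using e pos by simp
    fix t :: real assume t: "0 < t" "t < e / (norm h + 1)"
    have "t * norm h \<le> t * (norm h + 1)" using t by simp
    also have "\<dots> < e" using t pos by (simp add: less_divide_eq)
    finally have "x + t *\<^sub>R h \<in> ball x e" using t by (simp add: dist_norm)
    then have "norm (S (x + t *\<^sub>R h) - S x) \<le> L * norm (x + t *\<^sub>R h - x)"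
      using lipschitz_on_normD[OF lip] U e by (meson centre_in_ball subsetD)
    then have "norm (S (x + t *\<^sub>R h) - S x) \<le> t * (L * norm h)" using t by (simp add: algebra_simps)
    then have "norm (S (x + t *\<^sub>R h) - S x) / t \<le> L * norm h"
      using t by (simp add: divide_le_eq mult.commute)
    then show "norm ((S (x + t *\<^sub>R h) - S x) /\<^sub>R t) \<le> L * norm h"
      using t by (simp add: divide_inverse_commute)
  qed
  then show ?thesis
    by (rule tendsto_upperbound[OF tendsto_norm[OF q]]) simp
qed

locale tr =
  fixes J :: "(real^'m) \<times> (real^'n) \<Rightarrow> real"
    and Jy :: "(real^'m) \<times> (real^'n) \<Rightarrow> real^'m"
    and Ju :: "(real^'m) \<times> (real^'n) \<Rightarrow> real^'n"
    and S :: "real^'n \<Rightarrow> real^'m"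
    and dS :: "real^'n \<Rightarrow> real^'n \<Rightarrow> real^'m"
    and f :: "real^'n \<Rightarrow> real"
    and Gs :: "real^'n \<Rightarrow> real \<Rightarrow> (real^'n^'m) set"
    and Dmin eta1 eta2 beta1 beta2 mu CH :: real
    and u d g :: "nat \<Rightarrow> real^'n"
    and H :: "nat \<Rightarrow> real^'n^'n"
    and Delta rho :: "nat \<Rightarrow> real"
    and ubar :: "real^'n"
  assumes J_deriv: "\<And>z. (J has_derivative (\<lambda>(dy, du). Jy z \<bullet> dy + Ju z \<bullet> du)) (at z)"
    and Jy_cont: "continuous_on UNIV Jy"
    and Ju_cont: "continuous_on UNIV Ju"
    and S_loclip: "\<And>x. \<exists>r>0. \<exists>L. L-lipschitz_on (cball x r) S"
    and S_dirdiff: "\<And>x h. ((\<lambda>t. (S (x + t *\<^sub>R h) - S x) /\<^sub>R t) \<longlongrightarrow> dS x h) (at_right 0)"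
    and f_def: "f = (\<lambda>x. J (S x, x))"
    and Gs_ne: "\<And>x D. D > 0 \<Longrightarrow> Gs x D \<noteq> {}"
    and Gs_bdd: "\<And>x D. D > 0 \<Longrightarrow> bounded (Gs x D)"
    and G1: "\<And>x D. D > 0 \<Longrightarrow> (\<Union>\<xi>\<in>cball x D. bouligand S \<xi>) \<subseteq> Gs x D"
    and G2: "\<And>xs Ds x. xs \<longlonglongrightarrow> x \<Longrightarrow> Ds \<longlonglongrightarrow> 0 \<Longrightarrow> (\<forall>k. Ds k > 0) \<Longrightarrow>
               0 \<notin> clarke_subdiff f x \<Longrightarrow>
               (\<lambda>k. SUP G\<in>Gs (xs k) (Ds k). INF W\<in>bouligand S x. mnorm (G - W)) \<longlonglongrightarrow> 0"
    and D_cond: "\<And>x h. \<exists>G\<in>bouligand S x. dS x h = G *v h"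
    and params: "Dmin > 0" "0 < eta1" "eta1 < eta2" "eta2 < 1" "0 < beta1" "beta1 < 1"
                "1 < beta2" "0 < mu" "mu \<le> 1" "Delta 0 > Dmin"
    and g_sub: "\<And>k. g k \<in> clarke_subdiff f (u k)"
    and H_sym: "\<And>k. transpose (H k) = H k"
    and no_stop: "\<And>k. g k \<noteq> 0"
    and step_large: "\<And>k. Delta k \<ge> Dmin \<Longrightarrow>
          norm (d k) \<le> Delta k \<and>
          f (u k) - (f (u k) + g k \<bullet> d k + (1/2) * (d k \<bullet> (H k *v d k)))
            \<ge> mu / 2 * norm (g k) * min_div (Delta k) (norm (g k)) (mnorm (H k)) \<and>
          rho k = (f (u k) - f (u k + d k)) /
                  (f (u k) - (f (u k) + g k \<bullet> d k + (1/2) * (d k \<bullet> (H k *v d k))))"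
    and step_small: "\<And>k. Delta k < Dmin \<Longrightarrow>
          norm (d k) \<le> Delta k \<and>
          f (u k) - (f (u k) + model_phi Gs S Jy Ju (u k) (Delta k) (d k) + (1/2) * (d k \<bullet> (H k *v d k)))
            \<ge> mu / 2 * model_psi Gs S Jy Ju (u k) (Delta k)
                * min_div (Delta k) (model_psi Gs S Jy Ju (u k) (Delta k)) (mnorm (H k)) \<and>
          rho k = (if model_psi Gs S Jy Ju (u k) (Delta k) > norm (g k) * Delta k
                   then (f (u k) - f (u k + d k)) /
                        (f (u k) - (f (u k) + model_phi Gs S Jy Ju (u k) (Delta k) (d k)
                                     + (1/2) * (d k \<bullet> (H k *v d k))))
                   else 0)"
    and u_upd: "\<And>k. u (Suc k) = (if rho k \<le> eta1 then u k else u k + d k)"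
    and Delta_upd: "\<And>k. Delta (Suc k) = (if rho k \<le> eta1 then beta1 * Delta k
                        else if rho k \<le> eta2 then max Dmin (Delta k)
                        else max Dmin (beta2 * Delta k))"
    and CH: "CH > 0" "\<And>k. mnorm (H k) \<le> CH"
    and accum: "\<exists>r. strict_mono r \<and> (u \<circ> r) \<longlonglongrightarrow> ubar"

begin

abbreviation zz where "zz x \<equiv> (S x, x)"

lemma S_cont: "isCont S x"
proof -
  obtain r L where r: "r > 0" "L-lipschitz_on (cball x r) S" using S_loclip[of x] by blast
  have "continuous_on (cball x r) S" using lipschitz_on_continuous_on[OF r(2)] .
  then show ?thesis using r(1) by (simp add: continuous_on_interior)
qed

lemma J_cont: "isCont J z"
  using has_derivative_continuous[OF J_deriv] by (simp add: continuous_at)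

lemma f_cont: "isCont f x"
proof -
  have "isCont (\<lambda>x. (S x, x)) x" using S_cont by (intro continuous_intros) auto
  then show ?thesis unfolding f_def using J_cont by (rule continuous_at_compose[unfolded o_def])
qed

lemma zz_cont: "isCont zz x" using S_cont by (intro continuous_intros) auto

lemma Jy_zz_cont: "isCont (\<lambda>x. Jy (zz x)) x"
proof -
  have "isCont Jy (zz x)" using Jy_cont continuous_on_eq_continuous_at by blast
  then show ?thesis using continuous_at_compose[OF zz_cont] by (simp add: o_def)
qed

lemma Ju_zz_cont: "isCont (\<lambda>x. Ju (zz x)) x"
proof -
  have "isCont Ju (zz x)" using Ju_cont continuous_on_eq_continuous_at by blast
  then show ?thesis using continuous_at_compose[OF zz_cont] by (simp add: o_def)
qed

lemma Delta_pos: "Delta k > 0"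
proof (induction k)
  case 0 then show ?case using params by simp
next
  case (Suc k) then show ?case using params by (auto simp: Delta_upd)
qed

abbreviation "ql k \<equiv> f (u k) - (f (u k) + g k \<bullet> d k + (1/2) * (d k \<bullet> (H k *v d k)))"
abbreviation "psik k \<equiv> model_psi Gs S Jy Ju (u k) (Delta k)"
abbreviation "phik k \<equiv> model_phi Gs S Jy Ju (u k) (Delta k) (d k)"
abbreviation "qs k \<equiv> f (u k) - (f (u k) + phik k + (1/2) * (d k \<bullet> (H k *v d k)))"
abbreviation "pr k \<equiv> if Dmin \<le> Delta k then ql k else qs k"

lemma success:
  assumes r: "rho k > eta1"
  shows "u (Suc k) = u k + d k" "Delta (Suc k) \<ge> Dmin" "pr k > 0"
    "f (u k) - f (u (Suc k)) \<ge> eta1 * pr k"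
    "Delta k < Dmin \<Longrightarrow> psik k > norm (g k) * Delta k"
proof -
  show u1: "u (Suc k) = u k + d k" using r by (simp add: u_upd)
  show "Delta (Suc k) \<ge> Dmin" using r by (simp add: Delta_upd)
  have gpos: "norm (g k) > 0" using no_stop by simp
  have Dp: "Delta k > 0" by (rule Delta_pos)
  have mH: "mnorm (H k) \<ge> 0" unfolding mnorm_def by (rule onorm_pos_le) simp
  have eta1p: "eta1 > 0" using params by simp
  have mdp: "min_div D a b > 0" if "D > 0" "a > 0" "b \<ge> 0" for D a b :: real
    using that by (auto simp: min_div_def)
  show psi: "psik k > norm (g k) * Delta k" if "Delta k < Dmin"
  proof (rule ccontr)
    assume "\<not> ?thesis"
    then have "rho k = 0" using step_small[OF that] by simp
    with r eta1p show False by simp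
  qed
  have "pr k > 0 \<and> rho k = (f (u k) - f (u k + d k)) / pr k"
  proof (cases "Dmin \<le> Delta k")
    case True
    have "ql k \<ge> mu / 2 * norm (g k) * min_div (Delta k) (norm (g k)) (mnorm (H k))"
      using step_large[OF True] by blast
    moreover have "mu / 2 * norm (g k) * min_div (Delta k) (norm (g k)) (mnorm (H k)) > 0"
      using params gpos mdp[OF Dp gpos mH] by simp
    ultimately show ?thesis using step_large[OF True] True by simp
  next
    case False
    then have F: "Delta k < Dmin" by simp
    have pp: "psik k > 0" using psi[OF F] gpos Dp by (smt (verit) mult_pos_pos)
    have "qs k \<ge> mu / 2 * psik k * min_div (Delta k) (psik k) (mnorm (H k))"
      using step_small[OF F] by blast
    moreover have "mu / 2 * psik k * min_div (Delta k) (psik k) (mnorm (H k)) > 0"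
      using params pp mdp[OF Dp pp mH] by simp
    ultimately show ?thesis using step_small[OF F] psi[OF F] False by simp
  qed
  then have pp: "pr k > 0" and rr: "rho k = (f (u k) - f (u k + d k)) / pr k" by auto
  show "pr k > 0" by (rule pp)
  have "f (u k) - f (u k + d k) = rho k * pr k" using rr pp by simp
  moreover have "rho k * pr k \<ge> eta1 * pr k" using r pp by simp
  ultimately show "f (u k) - f (u (Suc k)) \<ge> eta1 * pr k" using u1 by simp
qed

lemma fail:
  assumes "rho k \<le> eta1" shows "u (Suc k) = u k" "Delta (Suc k) = beta1 * Delta k"
  using assms by (simp_all add: u_upd Delta_upd)

lemma f_dec: "f (u (Suc k)) \<le> f (u k)"
proof (cases "rho k > eta1")
  case True
  from success[OF True] params show ?thesis by (smt (verit) mult_pos_pos)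
next
  case False then show ?thesis using fail by simp
qed

end

context tr begin

lemma fu_conv: "(\<lambda>k. f (u k)) \<longlonglongrightarrow> f ubar"
proof -
  obtain r where r: "strict_mono r" "(u \<circ> r) \<longlonglongrightarrow> ubar" using accum by blast
  define F where "F k = f (u k)" for k
  have dF: "decseq F" unfolding F_def by (rule decseq_SucI) (rule f_dec)
  have Fr: "(F \<circ> r) \<longlonglongrightarrow> f ubar"
    using isCont_tendsto_compose[OF f_cont r(2)] by (simp add: F_def o_def)
  have lb: "f ubar \<le> F k" for k
  proof (rule tendsto_upperbound[OF Fr])
    show "eventually (\<lambda>j. (F \<circ> r) j \<le> F k) sequentially"
      unfolding eventually_sequentially
    proof (intro exI[of _ k] allI impI)
      fix j assume "k \<le> j"
      then have "k \<le> r j" using seq_suble[OF r(1), of j] by simp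
      then show "(F \<circ> r) j \<le> F k" using dF by (simp add: decseq_def)
    qed
  qed simp
  obtain L where L: "F \<longlonglongrightarrow> L" using decseq_convergent[OF dF, of "f ubar"] lb by blast
  have "(F \<circ> r) \<longlonglongrightarrow> L" using LIMSEQ_subseq_LIMSEQ[OF L r(1)] .
  then have "L = f ubar" using Fr LIMSEQ_unique by blast
  moreover have "F = (\<lambda>k. f (u k))" by (simp add: fun_eq_iff F_def)
  ultimately show ?thesis using L by simp
qed

lemma dec_to0: "(\<lambda>k. f (u k) - f (u (Suc k))) \<longlonglongrightarrow> 0"
  using tendsto_diff[OF fu_conv LIMSEQ_Suc[OF fu_conv]] by simp

definition "r0 = (SOME r. r > 0 \<and> (\<exists>L. L-lipschitz_on (cball ubar r) S))"
definition "LS = (SOME L. L-lipschitz_on (cball ubar r0) S)"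

lemma lipS: "r0 > 0" "LS-lipschitz_on (cball ubar r0) S" "LS \<ge> 0"
proof -
  have ex: "\<exists>r. r > 0 \<and> (\<exists>L. L-lipschitz_on (cball ubar r) S)" using S_loclip[of ubar] by blast
  have "r0 > 0 \<and> (\<exists>L. L-lipschitz_on (cball ubar r0) S)" unfolding r0_def using someI_ex[OF ex] .
  then have r: "r0 > 0" and ex2: "\<exists>L. L-lipschitz_on (cball ubar r0) S" by auto
  show "r0 > 0" by (rule r)
  show l: "LS-lipschitz_on (cball ubar r0) S" unfolding LS_def by (rule someI_ex[OF ex2])
  show "LS \<ge> 0" using lipschitz_on_nonneg[OF l] .
qed

lemma J_onorm: "onorm (\<lambda>(dy, du). Jy z \<bullet> dy + Ju z \<bullet> du) \<le> norm (Jy z) + norm (Ju z)"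
proof (rule onorm_le)
  fix p :: "(real^'m) \<times> (real^'n)"
  obtain a b where p: "p = (a, b)" by (cases p)
  have "\<bar>Jy z \<bullet> a + Ju z \<bullet> b\<bar> \<le> \<bar>Jy z \<bullet> a\<bar> + \<bar>Ju z \<bullet> b\<bar>" by (rule abs_triangle_ineq)
  also have "\<dots> \<le> norm (Jy z) * norm a + norm (Ju z) * norm b"
    by (intro add_mono Cauchy_Schwarz_ineq2)
  also have "\<dots> \<le> norm (Jy z) * norm p + norm (Ju z) * norm p"
    using p by (intro add_mono mult_left_mono) (auto intro: norm_fst_le norm_snd_le)
  finally show "norm (case p of (dy, du) \<Rightarrow> Jy z \<bullet> dy + Ju z \<bullet> du) \<le> (norm (Jy z) + norm (Ju z)) * norm p"
    by (simp add: p algebra_simps)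
qed

lemma f_lip_ex: "\<exists>L\<ge>0. \<forall>y\<in>cball ubar r0. \<forall>z\<in>cball ubar r0. \<bar>f y - f z\<bar> \<le> L * norm (y - z)"
proof -
  define K where "K = cball (zz ubar) ((LS + 1) * r0)"
  have cK: "compact K" "convex K" by (simp_all add: K_def)
  have c1: "continuous_on K Jy" using Jy_cont continuous_on_subset by blast
  have c2: "continuous_on K Ju" using Ju_cont continuous_on_subset by blast
  have "continuous_on K (\<lambda>z. norm (Jy z) + norm (Ju z))"
    by (intro continuous_on_add continuous_on_norm c1 c2)
  then have "bounded ((\<lambda>z. norm (Jy z) + norm (Ju z)) ` K)"
    using compact_continuous_image[OF _ cK(1)] compact_imp_bounded by blast
  then obtain B where B: "\<And>z. z \<in> K \<Longrightarrow> norm (Jy z) + norm (Ju z) \<le> B"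
    unfolding bounded_iff by (metis (no_types, lifting) image_eqI real_norm_def abs_le_D1)
  have zK: "zz y \<in> K" if "y \<in> cball ubar r0" for y
  proof -
    have "norm (S y - S ubar) \<le> LS * norm (y - ubar)"
      using lipschitz_on_normD[OF lipS(2) that] lipS(1) by simp
    also have "\<dots> \<le> LS * r0" using that lipS(3) by (intro mult_left_mono) (auto simp: dist_norm norm_minus_commute)
    finally have a: "norm (S y - S ubar) \<le> LS * r0" .
    have b: "norm (y - ubar) \<le> r0" using that by (simp add: dist_norm norm_minus_commute)
    have "norm (zz ubar - zz y) \<le> norm (S ubar - S y) + norm (ubar - y)"
      using norm_Pair_le[of "S ubar - S y" "ubar - y"] by simp
    also have "\<dots> \<le> (LS + 1) * r0" using a b by (simp add: norm_minus_commute algebra_simps)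
    finally show ?thesis by (simp add: K_def dist_norm)
  qed
  have "ubar \<in> cball ubar r0" using lipS(1) by simp
  then have "norm (Jy (zz ubar)) + norm (Ju (zz ubar)) \<le> B" using B[OF zK] by blast
  moreover have "0 \<le> norm (Jy (zz ubar)) + norm (Ju (zz ubar))" by simp
  ultimately have B0: "B \<ge> 0" by linarith
  have Jl: "norm (J a - J b) \<le> B * norm (a - b)" if "a \<in> K" "b \<in> K" for a b
  proof (rule differentiable_bound[OF cK(2) _ _ that])
    show "(J has_derivative (\<lambda>(dy, du). Jy z \<bullet> dy + Ju z \<bullet> du)) (at z within K)" for z
      using J_deriv has_derivative_at_withinI by blast
    show "onorm (\<lambda>(dy, du). Jy z \<bullet> dy + Ju z \<bullet> du) \<le> B" if "z \<in> K" for z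
      using J_onorm[of z] B[OF that] by simp
  qed
  show ?thesis
  proof (intro exI[of _ "B * (LS + 1)"] conjI ballI)
    show "0 \<le> B * (LS + 1)" using B0 lipS(3) by simp
    fix y z assume y: "y \<in> cball ubar r0" and z: "z \<in> cball ubar r0"
    have "\<bar>f y - f z\<bar> \<le> B * norm (zz y - zz z)" using Jl[OF zK[OF y] zK[OF z]] by (simp add: f_def)
    also have "norm (zz y - zz z) \<le> (LS + 1) * norm (y - z)"
    proof -
      have "norm (zz y - zz z) \<le> norm (S y - S z) + norm (y - z)"
        using norm_Pair_le[of "S y - S z" "y - z"] by simp
      also have "norm (S y - S z) \<le> LS * norm (y - z)" using lipschitz_on_normD[OF lipS(2) y z] .
      finally show ?thesis by (simp add: algebra_simps)
    qed
    then have "B * norm (zz y - zz z) \<le> B * ((LS + 1) * norm (y - z))" using B0 by (rule mult_left_mono)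
    finally show "\<bar>f y - f z\<bar> \<le> B * (LS + 1) * norm (y - z)" by (simp add: mult.assoc)
  qed
qed

definition "Lf = (SOME L. L \<ge> 0 \<and> (\<forall>y\<in>cball ubar r0. \<forall>z\<in>cball ubar r0. \<bar>f y - f z\<bar> \<le> L * norm (y - z)))"

lemma lipf: "Lf \<ge> 0" "\<And>y z. y \<in> cball ubar r0 \<Longrightarrow> z \<in> cball ubar r0 \<Longrightarrow> \<bar>f y - f z\<bar> \<le> Lf * norm (y - z)"
  using someI_ex[OF f_lip_ex] unfolding Lf_def by blast+

lemma g_bound: assumes "norm (u k - ubar) < r0 / 2" shows "norm (g k) \<le> Lf"
proof (rule clarke_subgrad_bound[OF _ lipf(1) _ g_sub])
  show "r0 / 2 > 0" using lipS(1) by simp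
  show "\<bar>f y - f z\<bar> \<le> Lf * norm (y - z)" if "y \<in> ball (u k) (r0 / 2)" "z \<in> ball (u k) (r0 / 2)" for y z
  proof (rule lipf(2))
    show "y \<in> cball ubar r0" using that(1) assms dist_triangle[of ubar y "u k"]
      by (simp add: dist_norm norm_minus_commute)
    show "z \<in> cball ubar r0" using that(2) assms dist_triangle[of ubar z "u k"]
      by (simp add: dist_norm norm_minus_commute)
  qed
qed

end

lemma entry_le_norm: "\<bar>(A::real^'n^'m) $ i $ j\<bar> \<le> norm A"
proof -
  have "\<bar>(A $ i) $ j\<bar> \<le> norm (A $ i)" by (rule component_le_norm_cart)
  also have "norm (A $ i) \<le> norm A" by (rule Finite_Cartesian_Product.norm_nth_le)
  finally show ?thesis .
qed

context tr begin

lemma mnorm_nonneg: "mnorm A \<ge> 0"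
  unfolding mnorm_def by (rule onorm_pos_le) simp

lemma mv_le: "norm (A *v x) \<le> mnorm A * norm x"
  unfolding mnorm_def by (rule onorm) simp

lemma mnorm_le_norm: "mnorm (A :: real^'a^'b) \<le> real CARD('b) * (real CARD('a) * norm A)"
proof -
  have "mnorm A \<le> (\<Sum>i\<in>UNIV. \<Sum>j\<in>UNIV. \<bar>A $ i $ j\<bar>)"
    unfolding mnorm_def by (rule onorm_le_matrix_component_sum)
  also have "\<dots> \<le> (\<Sum>i\<in>(UNIV::'b set). real CARD('a) * norm A)"
  proof (rule sum_mono)
    fix i :: 'b
    have "\<bar>A $ i $ j\<bar> \<le> norm A" for j
      by (rule entry_le_norm)
    then show "(\<Sum>j\<in>UNIV. \<bar>A $ i $ j\<bar>) \<le> real CARD('a) * norm A"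
      using sum_bounded_above[of UNIV "\<lambda>j. \<bar>A $ i $ j\<bar>" "norm A"] by simp
  qed
  also have "\<dots> = real CARD('b) * (real CARD('a) * norm A)" by simp
  finally show ?thesis .
qed

lemma vW_le_clarke:
  assumes W: "W \<in> bouligand S x0"
  shows "ereal (Jy (zz x0) \<bullet> (W *v h) + Ju (zz x0) \<bullet> h) \<le> clarke_dd f x0 h"
proof -
  obtain xs Wj where xs: "xs \<longlonglongrightarrow> x0" and dW: "\<And>j. (S has_derivative (\<lambda>h. Wj j *v h)) (at (xs j))"
    and Wj: "Wj \<longlonglongrightarrow> W"
    using W unfolding bouligand_def by blast
  define c where "c j = Jy (zz (xs j)) \<bullet> (Wj j *v h) + Ju (zz (xs j)) \<bullet> h" for j
  define e where "e j = 1 / (real j + 1)" for j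
  have epos: "e j > 0" for j by (simp add: e_def)
  have e0: "e \<longlonglongrightarrow> 0" unfolding e_def using LIMSEQ_inverse_real_of_nat by (simp add: inverse_eq_divide add.commute)
  have q: "((\<lambda>t. (f (xs j + t *\<^sub>R h) - f (xs j)) / t) \<longlongrightarrow> c j) (at_right 0)" for j
    unfolding f_def c_def by (rule comp_dirderiv[OF J_deriv hasderiv_dirquot[OF dW]])
  have "\<exists>t. 0 < t \<and> t < e j \<and> c j - e j < (f (xs j + t *\<^sub>R h) - f (xs j)) / t" for j
  proof -
    have "eventually (\<lambda>t. c j - e j < (f (xs j + t *\<^sub>R h) - f (xs j)) / t) (at_right 0)"
      using order_tendstoD(1)[OF q[of j]] epos[of j] by simp
    moreover have "eventually (\<lambda>t. t < e j) (at_right (0::real))"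
      unfolding eventually_at_right_field using epos[of j] by blast
    ultimately have "eventually (\<lambda>t. t < e j \<and> c j - e j < (f (xs j + t *\<^sub>R h) - f (xs j)) / t) (at_right 0)"
      by (rule eventually_conj[rotated])
    then obtain b where b: "b > 0" "\<And>t. t > 0 \<Longrightarrow> t < b \<Longrightarrow> t < e j \<and> c j - e j < (f (xs j + t *\<^sub>R h) - f (xs j)) / t"
      unfolding eventually_at_right_field by auto
    show ?thesis using b(2)[of "b/2"] b(1) by (intro exI[of _ "b/2"]) auto
  qed
  then obtain t where t: "\<And>j. 0 < t j \<and> t j < e j \<and> c j - e j < (f (xs j + t j *\<^sub>R h) - f (xs j)) / t j"
    by metis
  have t0: "t \<longlonglongrightarrow> 0"
  proof (rule Lim_null_comparison[OF always_eventually e0], intro allI)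
    fix j show "norm (t j) \<le> e j" using t[of j] by simp
  qed
  have cc: "c \<longlonglongrightarrow> Jy (zz x0) \<bullet> (W *v h) + Ju (zz x0) \<bullet> h"
    unfolding c_def
    by (intro tendsto_add tendsto_inner tendsto_const tendsto_mv[OF Wj]
        isCont_tendsto_compose[OF Jy_zz_cont xs] isCont_tendsto_compose[OF Ju_zz_cont xs])
  show ?thesis
  proof (rule clarke_ge_seq[OF xs t0])
    show "0 < t j" for j using t[of j] by simp
    show "c j - e j \<le> (f (xs j + t j *\<^sub>R h) - f (xs j)) / t j" for j using t[of j] by simp
    show "(\<lambda>j. c j - e j) \<longlonglongrightarrow> Jy (zz x0) \<bullet> (W *v h) + Ju (zz x0) \<bullet> h"
      using tendsto_diff[OF cc e0] by simp
  qed
qed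

lemma bouligand_bound:
  assumes W: "W \<in> bouligand S ubar"
  shows "norm (W *v h) \<le> LS * norm h"
proof -
  obtain xs Wj where xs: "xs \<longlonglongrightarrow> ubar" and dW: "\<And>j. (S has_derivative (\<lambda>h. Wj j *v h)) (at (xs j))"
    and Wj: "Wj \<longlonglongrightarrow> W"
    using W unfolding bouligand_def by blast
  have "eventually (\<lambda>j. dist (xs j) ubar < r0 / 2) sequentially"
  proof -
    have r2: "r0 / 2 > 0" using lipS(1) by simp
    show ?thesis using xs r2 unfolding tendsto_iff by blast
  qed
  then have "eventually (\<lambda>j. norm (Wj j *v h) \<le> LS * norm h) sequentially"
  proof (rule eventually_mono)
    fix j assume j: "dist (xs j) ubar < r0 / 2"
    have sub: "ball (xs j) (r0 / 2) \<subseteq> cball ubar r0"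
    proof
      fix y assume "y \<in> ball (xs j) (r0 / 2)"
      then have "dist (xs j) y < r0 / 2" by simp
      then show "y \<in> cball ubar r0" using j dist_triangle[of ubar y "xs j"] by (simp add: dist_commute)
    qed
    show "norm (Wj j *v h) \<le> LS * norm h"
      using lip_dirquot_bound[OF hasderiv_dirquot[OF dW] lipS(2) _ sub] lipS(1) by simp
  qed
  then show ?thesis
    by (rule tendsto_upperbound[OF tendsto_norm[OF tendsto_mv[OF Wj]]]) simp
qed

lemma dS_bound:
  assumes x: "x \<in> ball ubar r0" shows "norm (dS x h) \<le> LS * norm h"
proof -
  define e where "e = r0 - dist ubar x"
  have e: "e > 0" using x by (simp add: e_def)
  have sub: "ball x e \<subseteq> cball ubar r0"
  proof
    fix y assume "y \<in> ball x e"
    then have "dist x y < e" by simp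
    then show "y \<in> cball ubar r0" using dist_triangle[of ubar y x] by (simp add: e_def)
  qed
  show ?thesis using lip_dirquot_bound[OF S_dirdiff lipS(2) e sub] .
qed

end

context tr begin

abbreviation "vl G x w \<equiv> Jy (zz x) \<bullet> (G *v w) + Ju (zz x) \<bullet> w"

lemma phi_eq: "model_phi Gs S Jy Ju x D w = (SUP G\<in>Gs x D. vl G x w)"
  unfolding model_phi_def by (simp add: inner_add_left dot_lmul_matrix)

lemma mnorm_diff: "mnorm (G - W) \<le> mnorm G + mnorm W"
  unfolding mnorm_def
proof (rule onorm_le)
  fix v
  have "norm ((G - W) *v v) \<le> norm (G *v v) + norm (W *v v)"
    by (simp add: matrix_vector_mult_diff_rdistrib norm_triangle_ineq4)
  also have "\<dots> \<le> mnorm G * norm v + mnorm W * norm v" by (intro add_mono mv_le)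
  finally show "norm ((G - W) *v v) \<le> (onorm ((*v) G) + onorm ((*v) W)) * norm v"
    by (simp add: mnorm_def algebra_simps)
qed

lemma vl_bound: "\<bar>vl G x w\<bar> \<le> (norm (Jy (zz x)) * mnorm G + norm (Ju (zz x))) * norm w"
proof -
  have "\<bar>vl G x w\<bar> \<le> \<bar>Jy (zz x) \<bullet> (G *v w)\<bar> + \<bar>Ju (zz x) \<bullet> w\<bar>" by (rule abs_triangle_ineq)
  also have "\<dots> \<le> norm (Jy (zz x)) * norm (G *v w) + norm (Ju (zz x)) * norm w"
    by (intro add_mono Cauchy_Schwarz_ineq2)
  also have "\<dots> \<le> norm (Jy (zz x)) * (mnorm G * norm w) + norm (Ju (zz x)) * norm w"
    by (intro add_mono mult_left_mono mv_le) auto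
  finally show ?thesis by (simp add: algebra_simps)
qed

lemma Gs_mbound: assumes "D > 0" shows "\<exists>M\<ge>0. \<forall>G\<in>Gs x D. mnorm G \<le> M"
proof -
  obtain a where a: "\<And>G. G \<in> Gs x D \<Longrightarrow> norm G \<le> a" using Gs_bdd[OF assms] unfolding bounded_iff by blast
  define M where "M = real CARD('m) * (real CARD('n) * max a 0)"
  show ?thesis
  proof (intro exI[of _ M] conjI ballI)
    show "0 \<le> M" by (simp add: M_def)
    fix G assume G: "G \<in> Gs x D"
    have "mnorm G \<le> real CARD('m) * (real CARD('n) * norm G)" by (rule mnorm_le_norm)
    also have "\<dots> \<le> M" unfolding M_def using a[OF G]
      by (intro mult_left_mono) auto
    finally show "mnorm G \<le> M" .
  qed
qed

lemma phi_bdd: assumes "D > 0" shows "bdd_above ((\<lambda>G. vl G x w) ` Gs x D)"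
proof -
  obtain M where M: "M \<ge> 0" "\<And>G. G \<in> Gs x D \<Longrightarrow> mnorm G \<le> M" using Gs_mbound[OF assms] by blast
  show ?thesis unfolding bdd_above_def
  proof (intro exI[of _ "(norm (Jy (zz x)) * M + norm (Ju (zz x))) * norm w"] ballI)
    fix v assume "v \<in> (\<lambda>G. vl G x w) ` Gs x D"
    then obtain G where G: "G \<in> Gs x D" "v = vl G x w" by blast
    have "v \<le> (norm (Jy (zz x)) * mnorm G + norm (Ju (zz x))) * norm w" using vl_bound[where G=G and x=x and w=w] G by simp
    also have "\<dots> \<le> (norm (Jy (zz x)) * M + norm (Ju (zz x))) * norm w"
      using M(2)[OF G(1)] by (intro mult_right_mono add_mono mult_left_mono) auto
    finally show "v \<le> (norm (Jy (zz x)) * M + norm (Ju (zz x))) * norm w" .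
  qed
qed

lemma phi_upper: assumes "D > 0" "G \<in> Gs x D" shows "vl G x w \<le> model_phi Gs S Jy Ju x D w"
  unfolding phi_eq by (rule cSUP_upper[OF assms(2) phi_bdd[OF assms(1)]])

lemma phi_least: assumes "D > 0" "\<And>G. G \<in> Gs x D \<Longrightarrow> vl G x w \<le> c" shows "model_phi Gs S Jy Ju x D w \<le> c"
  unfolding phi_eq by (rule cSUP_least[OF Gs_ne[OF assms(1)] assms(2)])

lemma psi_ge: assumes D: "D > 0" and h: "norm h \<le> 1"
  shows "- model_phi Gs S Jy Ju x D h \<le> model_psi Gs S Jy Ju x D"
proof -
  obtain G0 where G0: "G0 \<in> Gs x D" using Gs_ne[OF D] by blast
  define c where "c = norm (Jy (zz x)) * mnorm G0 + norm (Ju (zz x))"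
  have c0: "c \<ge> 0" by (simp add: c_def mnorm_nonneg)
  have "bdd_below ((\<lambda>h. model_phi Gs S Jy Ju x D h) ` cball 0 1)"
    unfolding bdd_below_def
  proof (intro exI[of _ "- c"] ballI)
    fix v assume "v \<in> (\<lambda>h. model_phi Gs S Jy Ju x D h) ` cball 0 1"
    then obtain h' where h': "norm h' \<le> 1" "v = model_phi Gs S Jy Ju x D h'" by auto
    have "\<bar>vl G0 x h'\<bar> \<le> c * norm h'" using vl_bound[where G=G0 and x=x and w=h'] by (simp add: c_def)
    also have "\<dots> \<le> c" using h'(1) c0 by (simp add: mult_left_le)
    finally have "- c \<le> vl G0 x h'" by linarith
    also have "\<dots> \<le> v" using phi_upper[OF D G0] h' by simp
    finally show "- c \<le> v" .
  qed
  then have "(INF h\<in>cball 0 1. model_phi Gs S Jy Ju x D h) \<le> model_phi Gs S Jy Ju x D h"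
    by (rule cINF_lower) (simp add: h)
  then show ?thesis unfolding model_psi_def by simp
qed

lemma vl_scale: "vl G x (c *\<^sub>R h) = c * vl G x h"
  by (simp add: matrix_vector_mult_scaleR algebra_simps)

lemma nonstat_dir:
  assumes ns: "0 \<notin> clarke_subdiff f ubar"
  obtains h1 c1 where "norm h1 = 1" "c1 > 0" "\<And>W. W \<in> bouligand S ubar \<Longrightarrow> vl W ubar h1 \<le> - c1"
proof -
  obtain h0 where h0: "\<not> ereal (0 \<bullet> h0) \<le> clarke_dd f ubar h0" using ns unfolding clarke_subdiff_def by blast
  then have neg: "clarke_dd f ubar h0 < 0" by (simp add: not_le zero_ereal_def)
  obtain W0 where W0: "W0 \<in> bouligand S ubar" using D_cond[of ubar h0] by blast
  have le: "ereal (vl W ubar h0) \<le> clarke_dd f ubar h0" if "W \<in> bouligand S ubar" for W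
    using vW_le_clarke[OF that] .
  obtain c0 where c0: "clarke_dd f ubar h0 = ereal c0"
    using le[OF W0] neg by (cases "clarke_dd f ubar h0") auto
  have c0n: "c0 < 0" using neg c0 by (simp add: zero_ereal_def)
  have leW: "vl W ubar h0 \<le> c0" if "W \<in> bouligand S ubar" for W using le[OF that] c0 by simp
  have h0nz: "h0 \<noteq> 0" using leW[OF W0] c0n by auto
  then have nh: "norm h0 > 0" by simp
  define h1 where "h1 = (1 / norm h0) *\<^sub>R h0"
  define c1 where "c1 = - c0 / norm h0"
  show ?thesis
  proof
    show "norm h1 = 1" using nh by (simp add: h1_def)
    show "c1 > 0" using c0n nh by (simp add: c1_def divide_neg_pos)
    fix W assume W: "W \<in> bouligand S ubar"
    have "vl W ubar h1 = vl W ubar h0 / norm h0" unfolding h1_def vl_scale by simp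
    also have "\<dots> \<le> c0 / norm h0" using leW[OF W] nh by (simp add: divide_right_mono)
    finally show "vl W ubar h1 \<le> - c1" by (simp add: c1_def)
  qed
qed

lemma unif_mod:
  assumes tau: "\<tau> > 0"
  shows "\<exists>\<delta>>0. \<forall>x\<in>cball ubar r0. \<forall>y\<in>cball ubar r0. dist y x < \<delta> \<longrightarrow>
           norm (Jy (zz y) - Jy (zz x)) * LS + norm (Ju (zz y) - Ju (zz x)) \<le> \<tau>"
proof -
  have c1: "continuous_on (cball ubar r0) (\<lambda>x. Jy (zz x))"
    using Jy_zz_cont by (intro continuous_at_imp_continuous_on) auto
  have c2: "continuous_on (cball ubar r0) (\<lambda>x. Ju (zz x))"
    using Ju_zz_cont by (intro continuous_at_imp_continuous_on) auto
  have u1: "uniformly_continuous_on (cball ubar r0) (\<lambda>x. Jy (zz x))"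
    by (rule compact_uniformly_continuous[OF c1]) simp
  have u2: "uniformly_continuous_on (cball ubar r0) (\<lambda>x. Ju (zz x))"
    by (rule compact_uniformly_continuous[OF c2]) simp
  define e1 where "e1 = \<tau> / (2 * (LS + 1))"
  have e1: "e1 > 0" using tau lipS(3) by (simp add: e1_def add_nonneg_pos)
  have e2: "\<tau> / 2 > 0" using tau by simp
  obtain d1 where d1: "d1 > 0" "\<And>x y. x \<in> cball ubar r0 \<Longrightarrow> y \<in> cball ubar r0 \<Longrightarrow> dist y x < d1 \<Longrightarrow>
      dist (Jy (zz y)) (Jy (zz x)) < e1"
    using u1 e1 unfolding uniformly_continuous_on_def by metis
  obtain d2 where d2: "d2 > 0" "\<And>x y. x \<in> cball ubar r0 \<Longrightarrow> y \<in> cball ubar r0 \<Longrightarrow> dist y x < d2 \<Longrightarrow>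
      dist (Ju (zz y)) (Ju (zz x)) < \<tau> / 2"
    using u2 e2 unfolding uniformly_continuous_on_def by metis
  show ?thesis
  proof (intro exI[of _ "min d1 d2"] conjI ballI impI)
    show "min d1 d2 > 0" using d1 d2 by simp
    fix x y assume x: "x \<in> cball ubar r0" and y: "y \<in> cball ubar r0" and w: "dist y x < min d1 d2"
    have a: "norm (Jy (zz y) - Jy (zz x)) \<le> e1" using d1(2)[OF x y] w by (simp add: dist_norm)
    have b: "norm (Ju (zz y) - Ju (zz x)) \<le> \<tau> / 2" using d2(2)[OF x y] w by (simp add: dist_norm)
    have "norm (Jy (zz y) - Jy (zz x)) * LS \<le> e1 * LS" using a lipS(3) by (rule mult_right_mono)
    also have "e1 * LS \<le> \<tau> / 2"
    proof -
      have "e1 * LS = \<tau> / 2 * (LS / (LS + 1))" using lipS(3) by (simp add: e1_def field_simps)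
      also have "\<dots> \<le> \<tau> / 2 * 1" using lipS(3) tau by (intro mult_left_mono) auto
      finally show ?thesis by simp
    qed
    finally show "norm (Jy (zz y) - Jy (zz x)) * LS + norm (Ju (zz y) - Ju (zz x)) \<le> \<tau>" using b by simp
  qed
qed

end

context tr begin

lemma ared_bound:
  assumes x: "norm (x - ubar) < r0 / 2" and D: "0 < D" "D < r0 / 2" and w: "norm w \<le> D"
    and tau: "\<forall>x'\<in>cball ubar r0. \<forall>y\<in>cball ubar r0. dist y x' < du \<longrightarrow>
           norm (Jy (zz y) - Jy (zz x')) * LS + norm (Ju (zz y) - Ju (zz x')) \<le> \<tau>"
    and Ddu: "D < du"
  shows "f (x + w) - f x \<le> model_phi Gs S Jy Ju x D w + \<tau> * norm w"
proof -
  define h where "h t = f (x + t *\<^sub>R w)" for t :: real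
  have hc: "continuous_on {0..1} h"
  proof (intro continuous_at_imp_continuous_on ballI)
    fix t :: real
    have c: "isCont (\<lambda>t. x + t *\<^sub>R w) t" by (intro continuous_intros)
    have "isCont (f \<circ> (\<lambda>t. x + t *\<^sub>R w)) t" by (rule continuous_at_compose[OF c f_cont])
    then show "isCont h t" unfolding h_def by (simp add: o_def)
  qed
  have xc: "x \<in> cball ubar r0" using x lipS(1) by (simp add: dist_norm norm_minus_commute)
  have der: "\<exists>Dv. ((\<lambda>s. (h (t + s) - h t) / s) \<longlongrightarrow> Dv) (at_right 0) \<and>
      Dv \<le> model_phi Gs S Jy Ju x D w + \<tau> * norm w" if t: "0 \<le> t" "t < 1" for t
  proof -
    define y where "y = x + t *\<^sub>R w"
    have q: "((\<lambda>s. (f (y + s *\<^sub>R w) - f y) / s) \<longlongrightarrow> Jy (zz y) \<bullet> dS y w + Ju (zz y) \<bullet> w) (at_right 0)"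
      unfolding f_def by (rule comp_dirderiv[OF J_deriv S_dirdiff])
    have eqf: "(\<lambda>s. (h (t + s) - h t) / s) = (\<lambda>s. (f (y + s *\<^sub>R w) - f y) / s)"
      by (simp add: h_def y_def scaleR_add_left add.assoc)
    obtain G where G: "G \<in> bouligand S y" "dS y w = G *v w" using D_cond[of y w] by blast
    have tw: "norm (t *\<^sub>R w) \<le> norm w" using t by (simp add: mult_left_le_one_le)
    have dyx: "dist y x \<le> D" using tw w by (simp add: y_def dist_norm)
    have yc0: "y \<in> cball x D" using dyx by (simp add: dist_commute)
    have GG: "G \<in> Gs x D" using G1[OF D(1), of x] G(1) yc0 by blast
    have yb: "y \<in> ball ubar r0"
    proof -
      have "dist ubar y \<le> dist ubar x + dist x y" by (rule dist_triangle)
      also have "\<dots> < r0 / 2 + r0 / 2" using x dyx D(2) by (simp add: dist_norm norm_minus_commute dist_commute)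
      finally show ?thesis by simp
    qed
    have yc: "y \<in> cball ubar r0" using yb by simp
    have mod: "norm (Jy (zz y) - Jy (zz x)) * LS + norm (Ju (zz y) - Ju (zz x)) \<le> \<tau>"
      using tau xc yc dyx Ddu by auto
    have dSb: "norm (G *v w) \<le> LS * norm w" using dS_bound[OF yb, of w] G(2) by simp
    have "Jy (zz y) \<bullet> dS y w + Ju (zz y) \<bullet> w
        = vl G x w + ((Jy (zz y) - Jy (zz x)) \<bullet> (G *v w) + (Ju (zz y) - Ju (zz x)) \<bullet> w)"
      using G(2) by (simp add: inner_diff_left)
    also have "(Jy (zz y) - Jy (zz x)) \<bullet> (G *v w) + (Ju (zz y) - Ju (zz x)) \<bullet> w
        \<le> norm (Jy (zz y) - Jy (zz x)) * norm (G *v w) + norm (Ju (zz y) - Ju (zz x)) * norm w"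
      by (intro add_mono Cauchy_Schwarz_ineq2[THEN abs_le_D1])
    also have "\<dots> \<le> norm (Jy (zz y) - Jy (zz x)) * (LS * norm w) + norm (Ju (zz y) - Ju (zz x)) * norm w"
      using dSb by (intro add_mono mult_left_mono) auto
    also have "\<dots> = (norm (Jy (zz y) - Jy (zz x)) * LS + norm (Ju (zz y) - Ju (zz x))) * norm w"
      by (simp add: algebra_simps)
    also have "\<dots> \<le> \<tau> * norm w" using mod by (rule mult_right_mono) simp
    finally have "Jy (zz y) \<bullet> dS y w + Ju (zz y) \<bullet> w \<le> vl G x w + \<tau> * norm w" by simp
    also have "vl G x w \<le> model_phi Gs S Jy Ju x D w" by (rule phi_upper[OF D(1) GG])
    finally show ?thesis using q eqf by (intro exI[of _ "Jy (zz y) \<bullet> dS y w + Ju (zz y) \<bullet> w"]) auto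
  qed
  have "h 1 - h 0 \<le> model_phi Gs S Jy Ju x D w + \<tau> * norm w" by (rule right_mvt[OF hc der])
  then show ?thesis by (simp add: h_def)
qed

lemma psi_lower:
  assumes D: "D > 0" and h1: "norm h1 = 1" and c1: "\<And>W. W \<in> bouligand S ubar \<Longrightarrow> vl W ubar h1 \<le> - c1"
  shows "c1 - (norm (Jy (zz x)) * (SUP G\<in>Gs x D. INF W\<in>bouligand S ubar. mnorm (G - W))
            + norm (Jy (zz x) - Jy (zz ubar)) * LS + norm (Ju (zz x) - Ju (zz ubar)))
         \<le> model_psi Gs S Jy Ju x D"
proof -
  define a where "a = (SUP G\<in>Gs x D. INF W\<in>bouligand S ubar. mnorm (G - W))"
  define b where "b = norm (Jy (zz x)) * a + norm (Jy (zz x) - Jy (zz ubar)) * LS + norm (Ju (zz x) - Ju (zz ubar))"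
  obtain W0 where W0: "W0 \<in> bouligand S ubar" using D_cond[of ubar 0] by blast
  have Bne: "bouligand S ubar \<noteq> {}" using W0 by blast
  obtain M where M: "M \<ge> 0" "\<And>G. G \<in> Gs x D \<Longrightarrow> mnorm G \<le> M" using Gs_mbound[OF D] by blast
  have bb: "bdd_below ((\<lambda>W. mnorm (G - W)) ` bouligand S ubar)" for G
    unfolding bdd_below_def by (intro exI[of _ 0]) (auto simp: mnorm_nonneg)
  have ba: "bdd_above ((\<lambda>G. INF W\<in>bouligand S ubar. mnorm (G - W)) ` Gs x D)"
    unfolding bdd_above_def
  proof (intro exI[of _ "M + mnorm W0"] ballI)
    fix v assume "v \<in> (\<lambda>G. INF W\<in>bouligand S ubar. mnorm (G - W)) ` Gs x D"
    then obtain G where G: "G \<in> Gs x D" "v = (INF W\<in>bouligand S ubar. mnorm (G - W))" by blast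
    have "v \<le> mnorm (G - W0)" unfolding G(2) by (rule cINF_lower[OF bb W0])
    also have "\<dots> \<le> mnorm G + mnorm W0" by (rule mnorm_diff)
    also have "\<dots> \<le> M + mnorm W0" using M(2)[OF G(1)] by simp
    finally show "v \<le> M + mnorm W0" .
  qed
  have main: "vl G x h1 \<le> - c1 + b" if G: "G \<in> Gs x D" for G
  proof (rule field_le_epsilon)
    fix e :: real assume e: "e > 0"
    define \<epsilon> where "\<epsilon> = e / (norm (Jy (zz x)) + 1)"
    have ep: "\<epsilon> > 0" using e by (simp add: \<epsilon>_def add_nonneg_pos)
    have ee: "norm (Jy (zz x)) * \<epsilon> \<le> e"
    proof -
      have "norm (Jy (zz x)) * \<epsilon> \<le> (norm (Jy (zz x)) + 1) * \<epsilon>" using ep by simp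
      also have "\<dots> = e"
      proof -
        have "norm (Jy (zz x)) + 1 \<noteq> 0" by (smt (verit) norm_ge_zero)
        then show ?thesis by (simp add: \<epsilon>_def)
      qed
      finally show ?thesis .
    qed
    have ia: "(INF W\<in>bouligand S ubar. mnorm (G - W)) \<le> a" unfolding a_def by (rule cSUP_upper[OF G ba])
    have "(INF W\<in>bouligand S ubar. mnorm (G - W)) < (INF W\<in>bouligand S ubar. mnorm (G - W)) + \<epsilon>"
      using ep by simp
    then obtain W where W: "W \<in> bouligand S ubar" "mnorm (G - W) < (INF W\<in>bouligand S ubar. mnorm (G - W)) + \<epsilon>"
      using cINF_less_iff[OF Bne bb] by blast
    have mW: "mnorm (G - W) \<le> a + \<epsilon>" using W(2) ia by simp
    have split: "vl G x h1 = vl W ubar h1 + (Jy (zz x) \<bullet> ((G - W) *v h1)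
        + (Jy (zz x) - Jy (zz ubar)) \<bullet> (W *v h1) + (Ju (zz x) - Ju (zz ubar)) \<bullet> h1)"
      by (simp add: matrix_vector_mult_diff_rdistrib inner_diff_left inner_diff_right)
    have t1: "Jy (zz x) \<bullet> ((G - W) *v h1) \<le> norm (Jy (zz x)) * a + e"
    proof -
      have "Jy (zz x) \<bullet> ((G - W) *v h1) \<le> norm (Jy (zz x)) * norm ((G - W) *v h1)"
        by (rule Cauchy_Schwarz_ineq2[THEN abs_le_D1])
      also have "\<dots> \<le> norm (Jy (zz x)) * mnorm (G - W)"
        using mv_le[of "G - W" h1] h1 by (intro mult_left_mono) auto
      also have "\<dots> \<le> norm (Jy (zz x)) * (a + \<epsilon>)" using mW by (intro mult_left_mono) auto
      also have "\<dots> \<le> norm (Jy (zz x)) * a + e" using ee by (simp add: algebra_simps)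
      finally show ?thesis .
    qed
    have t2: "(Jy (zz x) - Jy (zz ubar)) \<bullet> (W *v h1) \<le> norm (Jy (zz x) - Jy (zz ubar)) * LS"
    proof -
      have "(Jy (zz x) - Jy (zz ubar)) \<bullet> (W *v h1) \<le> norm (Jy (zz x) - Jy (zz ubar)) * norm (W *v h1)"
        by (rule Cauchy_Schwarz_ineq2[THEN abs_le_D1])
      also have "\<dots> \<le> norm (Jy (zz x) - Jy (zz ubar)) * LS"
        using bouligand_bound[OF W(1), of h1] h1 by (intro mult_left_mono) auto
      finally show ?thesis .
    qed
    have t3: "(Ju (zz x) - Ju (zz ubar)) \<bullet> h1 \<le> norm (Ju (zz x) - Ju (zz ubar))"
      using Cauchy_Schwarz_ineq2[THEN abs_le_D1, of "Ju (zz x) - Ju (zz ubar)" h1] h1 by simp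
    show "vl G x h1 \<le> - c1 + b + e"
      using split t1 t2 t3 c1[OF W(1)] by (simp add: b_def)
  qed
  have "model_phi Gs S Jy Ju x D h1 \<le> - c1 + b" by (rule phi_least[OF D main])
  moreover have "- model_phi Gs S Jy Ju x D h1 \<le> model_psi Gs S Jy Ju x D" using psi_ge[OF D] h1 by simp
  ultimately show ?thesis unfolding a_def[symmetric] b_def[symmetric] by simp
qed

end

context tr begin

lemma L_local:
  assumes ns: "0 \<notin> clarke_subdiff f ubar"
  shows "\<exists>\<delta>>0. \<exists>\<delta>D>0. \<delta>D < Dmin \<and> (\<forall>k. norm (u k - ubar) < \<delta> \<longrightarrow> Delta k < \<delta>D \<longrightarrow> rho k > eta1)"
proof (rule ccontr)
  assume na: "\<not> ?thesis"
  define ej where "ej j = 1 / (real j + 1)" for j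
  have ejp: "ej j > 0" "ej j \<le> 1" for j by (auto simp: ej_def)
  have ej0: "ej \<longlonglongrightarrow> 0" unfolding ej_def using LIMSEQ_inverse_real_of_nat by (simp add: inverse_eq_divide add.commute)
  have Dminp: "Dmin > 0" using params by simp
  have "\<exists>k. norm (u k - ubar) < r0 / 2 * ej j \<and> Delta k < Dmin / 2 * ej j \<and> rho k \<le> eta1" for j
  proof -
    have p1: "r0 / 2 * ej j > 0" using lipS(1) ejp[of j] by simp
    have p2: "Dmin / 2 * ej j > 0" using Dminp ejp[of j] by simp
    have p3: "Dmin / 2 * ej j < Dmin" using Dminp ejp[of j]
      by (smt (verit) mult_left_le field_sum_of_halves)
    from na p1 p2 p3 have "\<not> (\<forall>k. norm (u k - ubar) < r0 / 2 * ej j \<longrightarrow> Delta k < Dmin / 2 * ej j \<longrightarrow> rho k > eta1)"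
      by blast
    then show ?thesis by (auto simp: not_less)
  qed
  then obtain kk where kk: "\<And>j. norm (u (kk j) - ubar) < r0 / 2 * ej j \<and> Delta (kk j) < Dmin / 2 * ej j \<and> rho (kk j) \<le> eta1"
    by metis
  define xs where "xs j = u (kk j)" for j
  define Ds where "Ds j = Delta (kk j)" for j
  have Dsp: "\<forall>k. Ds k > 0" by (simp add: Ds_def Delta_pos)
  have xs: "xs \<longlonglongrightarrow> ubar"
  proof -
    have "(\<lambda>j. xs j - ubar) \<longlonglongrightarrow> 0"
    proof (rule Lim_null_comparison[OF always_eventually], intro allI)
      show "norm (xs j - ubar) \<le> r0 / 2 * ej j" for j using kk[of j] by (simp add: xs_def)
      show "(\<lambda>j. r0 / 2 * ej j) \<longlonglongrightarrow> 0" using tendsto_mult_left[OF ej0, of "r0/2"] by simp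
    qed
    then show ?thesis by (rule LIM_zero_cancel)
  qed
  have Ds: "Ds \<longlonglongrightarrow> 0"
  proof (rule Lim_null_comparison[OF always_eventually], intro allI)
    show "norm (Ds j) \<le> Dmin / 2 * ej j" for j using kk[of j] Dsp by (simp add: Ds_def less_imp_le)
    show "(\<lambda>j. Dmin / 2 * ej j) \<longlonglongrightarrow> 0" using tendsto_mult_left[OF ej0, of "Dmin/2"] by simp
  qed
  obtain h1 c1 where h1: "norm h1 = 1" and c1: "c1 > 0" and hc: "\<And>W. W \<in> bouligand S ubar \<Longrightarrow> vl W ubar h1 \<le> - c1"
    using nonstat_dir[OF ns] by blast
  define a where "a j = (SUP G\<in>Gs (xs j) (Ds j). INF W\<in>bouligand S ubar. mnorm (G - W))" for j
  have a0: "a \<longlonglongrightarrow> 0" unfolding a_def using G2[OF xs Ds Dsp ns] .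
  define b where "b j = norm (Jy (zz (xs j))) * a j + norm (Jy (zz (xs j)) - Jy (zz ubar)) * LS
      + norm (Ju (zz (xs j)) - Ju (zz ubar))" for j
  have b0: "b \<longlonglongrightarrow> 0"
  proof -
    have y: "(\<lambda>j. Jy (zz (xs j))) \<longlonglongrightarrow> Jy (zz ubar)" by (rule isCont_tendsto_compose[OF Jy_zz_cont xs])
    have v: "(\<lambda>j. Ju (zz (xs j))) \<longlonglongrightarrow> Ju (zz ubar)" by (rule isCont_tendsto_compose[OF Ju_zz_cont xs])
    have "(\<lambda>j. norm (Jy (zz (xs j))) * a j + norm (Jy (zz (xs j)) - Jy (zz ubar)) * LS
      + norm (Ju (zz (xs j)) - Ju (zz ubar))) \<longlonglongrightarrow>
       norm (Jy (zz ubar)) * 0 + norm (Jy (zz ubar) - Jy (zz ubar)) * LS + norm (Ju (zz ubar) - Ju (zz ubar))"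
      by (intro tendsto_add tendsto_mult tendsto_norm tendsto_diff y v a0 tendsto_const)
    then show ?thesis unfolding b_def[abs_def] by simp
  qed
  define \<epsilon>0 where "\<epsilon>0 = c1 / 2"
  have e0p: "\<epsilon>0 > 0" using c1 by (simp add: \<epsilon>0_def)
  have eta: "0 < eta1" "eta1 < 1" "0 < mu" using params by auto
  define \<tau> where "\<tau> = (1 - eta1) * mu * \<epsilon>0 / 4"
  have taup: "\<tau> > 0" using eta e0p by (simp add: \<tau>_def)
  obtain du where du: "du > 0" "\<forall>x\<in>cball ubar r0. \<forall>y\<in>cball ubar r0. dist y x < du \<longrightarrow>
           norm (Jy (zz y) - Jy (zz x)) * LS + norm (Ju (zz y) - Ju (zz x)) \<le> \<tau>"
    using unif_mod[OF taup] by blast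
  define m where "m = min du (min (\<epsilon>0 / (Lf + 1)) (min (\<epsilon>0 / CH) (min (2 * \<tau> / CH) (r0 / 2))))"
  have mp: "m > 0" using du e0p lipf(1) CH taup lipS(1) by (simp add: m_def add_nonneg_pos)
  have ev: "eventually (\<lambda>j. b j < \<epsilon>0 \<and> Ds j < m) sequentially"
    using order_tendstoD(2)[OF b0 e0p] order_tendstoD(2)[OF Ds mp] by (rule eventually_conj)
  then obtain j where jb: "b j < \<epsilon>0" and jD: "Ds j < m" using eventually_sequentially by auto
  define k where "k = kk j"
  define x where "x = u k"
  define D where "D = Delta k"
  have Dp: "D > 0" by (simp add: D_def Delta_pos)
  have xk: "norm (x - ubar) < r0 / 2"
  proof -
    have "norm (x - ubar) < r0 / 2 * ej j" using kk[of j] by (simp add: x_def k_def)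
    also have "\<dots> \<le> r0 / 2" using ejp[of j] lipS(1) by (simp add: mult_left_le)
    finally show ?thesis .
  qed
  have Dk: "D < Dmin"
  proof -
    have "D < Dmin / 2 * ej j" using kk[of j] by (simp add: D_def k_def)
    also have "\<dots> \<le> Dmin / 2" using ejp[of j] Dminp by (simp add: mult_left_le)
    finally show ?thesis using Dminp by simp
  qed
  have rk: "rho k \<le> eta1" using kk[of j] by (simp add: k_def)
  have Dm: "D < m" using jD by (simp add: D_def Ds_def k_def)
  have Ddu: "D < du" using Dm by (simp add: m_def)
  have DL: "D < \<epsilon>0 / (Lf + 1)" using Dm by (simp add: m_def)
  have DC: "D < \<epsilon>0 / CH" using Dm by (simp add: m_def)
  have DC2: "D < 2 * \<tau> / CH" using Dm by (simp add: m_def)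
  have Dr: "D < r0 / 2" using Dm by (simp add: m_def)
  have psik: "model_psi Gs S Jy Ju x D \<ge> \<epsilon>0"
  proof -
    have "c1 - b j \<le> model_psi Gs S Jy Ju x D"
      using psi_lower[OF Dp h1 hc, of x] by (simp add: b_def a_def xs_def Ds_def x_def D_def k_def)
    then show ?thesis using jb by (simp add: \<epsilon>0_def)
  qed
  have gk: "norm (g k) \<le> Lf" using g_bound[of k] xk by (simp add: x_def)
  have gD: "norm (g k) * D < \<epsilon>0"
  proof -
    have "norm (g k) * D \<le> Lf * D" using gk Dp by (simp add: mult_right_mono)
    also have "\<dots> \<le> (Lf + 1) * D" using Dp by simp
    also have "\<dots> < \<epsilon>0" using DL lipf(1) by (simp add: less_divide_eq mult.commute add_nonneg_pos)
    finally show ?thesis .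
  qed
  have sm: "norm (d k) \<le> D"
    "qs k \<ge> mu / 2 * model_psi Gs S Jy Ju x D * min_div D (model_psi Gs S Jy Ju x D) (mnorm (H k))"
    "rho k = (if model_psi Gs S Jy Ju x D > norm (g k) * D
                   then (f x - f (x + d k)) / qs k else 0)"
    using step_small[of k] Dk by (simp_all add: x_def D_def)
  define P where "P = model_psi Gs S Jy Ju x D"
  have PgD: "P > norm (g k) * D" using psik gD by (simp add: P_def)
  have rhoeq: "rho k = (f x - f (x + d k)) / qs k" using sm(3) PgD by (simp add: P_def)
  have mH: "mnorm (H k) \<le> CH" "mnorm (H k) \<ge> 0" using CH(2) mnorm_nonneg by auto
  have md: "min_div D P (mnorm (H k)) = D"
  proof (cases "mnorm (H k) = 0")
    case True then show ?thesis by (simp add: min_div_def)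
  next
    case False
    then have pos: "mnorm (H k) > 0" using mH by simp
    have "D * mnorm (H k) \<le> D * CH" using mH Dp by simp
    also have "\<dots> < \<epsilon>0" using DC CH(1) by (simp add: less_divide_eq)
    also have "\<dots> \<le> P" using psik by (simp add: P_def)
    finally have "D \<le> P / mnorm (H k)" using pos by (simp add: le_divide_eq)
    then show ?thesis using False by (simp add: min_div_def)
  qed
  have qsb: "qs k \<ge> mu / 2 * \<epsilon>0 * D"
  proof -
    have "mu / 2 * \<epsilon>0 * D \<le> mu / 2 * P * D"
      using psik eta Dp by (intro mult_right_mono mult_left_mono) (auto simp: P_def)
    also have "\<dots> \<le> qs k" using sm(2) md by (simp add: P_def)
    finally show ?thesis .
  qed
  have qsp: "qs k > 0" using qsb eta e0p Dp by (smt (verit) mult_pos_pos half_gt_zero)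
  have ab: "f (x + d k) - f x \<le> phik k + \<tau> * norm (d k)"
    using ared_bound[OF xk Dp Dr sm(1) du(2) Ddu] by (simp add: x_def D_def)
  have tD: "\<tau> * norm (d k) \<le> \<tau> * D" using sm(1) taup by simp
  have dHd: "\<bar>d k \<bullet> (H k *v d k)\<bar> \<le> CH * D * D"
  proof -
    have "\<bar>d k \<bullet> (H k *v d k)\<bar> \<le> norm (d k) * norm (H k *v d k)" by (rule Cauchy_Schwarz_ineq2)
    also have "\<dots> \<le> norm (d k) * (mnorm (H k) * norm (d k))" by (intro mult_left_mono mv_le) auto
    also have "\<dots> \<le> D * (CH * D)"
      using sm(1) mH Dp by (intro mult_mono) (auto intro: mult_mono)
    finally show ?thesis by (simp add: algebra_simps)
  qed
  have qsdef: "qs k = - phik k - (1/2) * (d k \<bullet> (H k *v d k))" by (simp add: x_def)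
  have ared: "f x - f (x + d k) \<ge> qs k - CH * D * D / 2 - \<tau> * D"
    using ab tD dHd qsdef by (simp add: x_def)
  have "(1 - eta1) * qs k \<ge> (1 - eta1) * (mu / 2 * \<epsilon>0 * D)"
    using qsb eta by (intro mult_left_mono) auto
  moreover have e2: "(1 - eta1) * (mu / 2 * \<epsilon>0 * D) = 2 * \<tau> * D" by (simp add: \<tau>_def)
  ultimately have q2: "(1 - eta1) * qs k \<ge> 2 * \<tau> * D" by linarith
  have CHD: "CH * D < 2 * \<tau>" using DC2 CH(1) by (simp add: less_divide_eq mult.commute)
  have c3: "CH * D * D / 2 < \<tau> * D" using CHD Dp by (simp add: mult_strict_right_mono)
  obtain Q where Qd: "qs k = Q" by blast
  have ared': "f x - f (x + d k) \<ge> Q - CH * D * D / 2 - \<tau> * D" using ared unfolding Qd .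
  have q2': "(1 - eta1) * Q \<ge> 2 * \<tau> * D" using q2 unfolding Qd .
  have eQ: "(1 - eta1) * Q = Q - eta1 * Q" by (simp add: algebra_simps)
  have fin: "f x - f (x + d k) > eta1 * Q" using ared' q2' eQ c3 by linarith
  have "f x - f (x + d k) > eta1 * qs k" using fin unfolding Qd .
  then have "rho k > eta1" using rhoeq qsp by (simp add: less_divide_eq mult.commute)
  with rk show False by simp
qed

end

context tr begin

lemma min_div_ge:
  assumes "b \<ge> 0" "b \<le> C" "C > 0" "a \<ge> 0"
  shows "min D (a / C) \<le> min_div D a b"
proof (cases "b = 0")
  case True then show ?thesis by (simp add: min_div_def)
next
  case False
  then have "b > 0" using assms by simp
  then have "a / C \<le> a / b" using assms by (intro divide_left_mono) auto
  then show ?thesis using False by (auto simp: min_div_def)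
qed

lemma claimA:
  assumes L: "\<forall>k. norm (u k - ubar) < \<delta> \<longrightarrow> Delta k < \<delta>D \<longrightarrow> rho k > eta1"
    and dD: "\<delta>D > 0" "\<delta>D < Dmin"
    and near: "norm (u (Suc k) - ubar) < \<delta>"
  shows "Delta (Suc k) \<ge> beta1 * \<delta>D"
proof (cases "rho k > eta1")
  case True
  have "beta1 * \<delta>D \<le> \<delta>D" using params dD by (simp add: mult_left_le_one_le)
  then show ?thesis using success(2)[OF True] dD by linarith
next
  case False
  then have r: "rho k \<le> eta1" by simp
  have "norm (u k - ubar) < \<delta>" using near fail(1)[OF r] by simp
  then have "Delta k \<ge> \<delta>D" using L False by (meson not_less)
  then show ?thesis using fail(2)[OF r] params by simp
qed

lemma claimB:
  assumes L: "\<forall>k. norm (u k - ubar) < \<delta> \<longrightarrow> Delta k < \<delta>D \<longrightarrow> rho k > eta1"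
    and dD: "\<delta>D > 0" "\<delta>D < Dmin"
    and near: "norm (u k - ubar) < \<delta>" and k1: "k \<ge> 1"
  shows "\<exists>s\<ge>k. u s = u k \<and> Delta s \<ge> beta1 * \<delta>D \<and> rho s > eta1"
proof -
  have ex: "\<exists>i. k \<le> i \<and> rho i > eta1"
  proof (rule ccontr)
    assume "\<not> ?thesis"
    then have allf: "\<And>i. k \<le> i \<Longrightarrow> rho i \<le> eta1" by (meson not_less)
    have un: "u (k + n) = u k \<and> Delta (k + n) = beta1 ^ n * Delta k" for n
    proof (induction n)
      case 0 then show ?case by simp
    next
      case (Suc n)
      have r: "rho (k + n) \<le> eta1" using allf by simp
      show ?case using fail[OF r] Suc by simp
    qed
    have "(\<lambda>n. beta1 ^ n * Delta k) \<longlonglongrightarrow> 0 * Delta k"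
      using params by (intro tendsto_mult LIMSEQ_power_zero tendsto_const) auto
    then have "eventually (\<lambda>n. beta1 ^ n * Delta k < \<delta>D) sequentially"
      using dD by (intro order_tendstoD(2)) auto
    then obtain n where n: "beta1 ^ n * Delta k < \<delta>D" using eventually_sequentially by auto
    have "rho (k + n) > eta1" using L un[of n] near n by simp
    with allf[of "k + n"] show False by simp
  qed
  define s where "s = (LEAST i. k \<le> i \<and> rho i > eta1)"
  have s: "k \<le> s" "rho s > eta1" using LeastI_ex[OF ex] by (simp_all add: s_def)
  have before: "\<And>i. k \<le> i \<Longrightarrow> i < s \<Longrightarrow> rho i \<le> eta1"
    using not_less_Least s_def by (metis not_less)
  have un: "k + n \<le> s \<longrightarrow> u (k + n) = u k" for n
  proof (induction n)
    case 0 then show ?case by simp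
  next
    case (Suc n)
    show ?case
    proof
      assume a: "k + Suc n \<le> s"
      then have r: "rho (k + n) \<le> eta1" using before[of "k + n"] by simp
      show "u (k + Suc n) = u k" using fail(1)[OF r] Suc a by simp
    qed
  qed
  have us: "u s = u k" using un[of "s - k"] s(1) by simp
  obtain s' where s': "s = Suc s'" using s(1) k1 by (cases s) auto
  have "Delta s \<ge> beta1 * \<delta>D" using claimA[OF L dD] near us s' by simp
  then show ?thesis using s us by blast
qed

lemma claimC:
  assumes r: "rho s > eta1" and Dl: "Delta s \<ge> Dl" and Dlp: "Dl > 0" and g: "norm (g s) \<ge> \<epsilon>" and e: "\<epsilon> > 0"
  shows "f (u s) - f (u (Suc s)) \<ge> eta1 * (mu / 2) * min (\<epsilon> * min Dmin (\<epsilon> / CH)) ((\<epsilon> * Dl) * min Dl ((\<epsilon> * Dl) / CH))"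
proof -
  define K where "K = min (\<epsilon> * min Dmin (\<epsilon> / CH)) ((\<epsilon> * Dl) * min Dl ((\<epsilon> * Dl) / CH))"
  have mH: "mnorm (H s) \<ge> 0" "mnorm (H s) \<le> CH" using mnorm_nonneg CH by auto
  have mu: "mu > 0" using params by simp
  have CHp: "CH > 0" using CH by simp
  have Dminp: "Dmin > 0" using params by simp
  have "pr s \<ge> mu / 2 * K"
  proof (cases "Dmin \<le> Delta s")
    case True
    have "mu / 2 * K \<le> mu / 2 * (\<epsilon> * min Dmin (\<epsilon> / CH))" by (simp add: K_def mu)
    also have "\<dots> \<le> mu / 2 * (norm (g s) * min (Delta s) (norm (g s) / CH))"
      using g e True CHp Dminp mu
      by (intro mult_left_mono mult_mono min.mono divide_right_mono) auto
    also have "\<dots> \<le> mu / 2 * (norm (g s) * min_div (Delta s) (norm (g s)) (mnorm (H s)))"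
      using min_div_ge[OF mH CHp, of "norm (g s)" "Delta s"] mu by (intro mult_left_mono) auto
    also have "\<dots> \<le> ql s" using step_large[OF True] by (simp add: mult.assoc)
    finally show ?thesis using True by simp
  next
    case False
    then have F: "Delta s < Dmin" by simp
    define P where "P = psik s"
    have P: "P > norm (g s) * Delta s" using success(5)[OF r F] by (simp add: P_def)
    have p0: "\<epsilon> * Dl \<le> P"
    proof -
      have "\<epsilon> * Dl \<le> norm (g s) * Delta s" using g Dl e Dlp by (intro mult_mono) auto
      then show ?thesis using P by simp
    qed
    have p0p: "\<epsilon> * Dl > 0" using e Dlp by simp
    have "mu / 2 * K \<le> mu / 2 * ((\<epsilon> * Dl) * min Dl ((\<epsilon> * Dl) / CH))" by (simp add: K_def mu)
    also have "\<dots> \<le> mu / 2 * (P * min (Delta s) (P / CH))"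
      using p0 p0p Dl CHp Dlp mu
      by (intro mult_left_mono mult_mono min.mono divide_right_mono) auto
    also have "\<dots> \<le> mu / 2 * (P * min_div (Delta s) P (mnorm (H s)))"
      using min_div_ge[OF mH CHp, of P "Delta s"] mu p0 p0p by (intro mult_left_mono) auto
    also have "\<dots> \<le> qs s" using step_small[OF F] by (simp add: P_def mult.assoc)
    finally show ?thesis using False by simp
  qed
  then have "eta1 * (mu / 2 * K) \<le> eta1 * pr s" using params by (intro mult_left_mono) auto
  also have "\<dots> \<le> f (u s) - f (u (Suc s))" by (rule success(4)[OF r])
  finally show ?thesis by (simp add: K_def mult.assoc)
qed

lemma main: "0 \<in> clarke_subdiff f ubar"
proof (rule ccontr)
  assume ns: "0 \<notin> clarke_subdiff f ubar"
  obtain \<delta> \<delta>D where dp: "\<delta> > 0" and dD: "\<delta>D > 0" "\<delta>D < Dmin"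
    and L: "\<forall>k. norm (u k - ubar) < \<delta> \<longrightarrow> Delta k < \<delta>D \<longrightarrow> rho k > eta1"
    using L_local[OF ns] by blast
  define Dl where "Dl = beta1 * \<delta>D"
  have Dlp: "Dl > 0" using params dD by (simp add: Dl_def)
  obtain r where r: "strict_mono r" "(u \<circ> r) \<longlonglongrightarrow> ubar" using accum by blast
  define P where "P j = (norm (u (r j) - ubar) < \<delta> \<and> r j \<ge> 1)" for j
  define s where "s j = (if P j then (SOME s. s \<ge> r j \<and> u s = u (r j) \<and> Delta s \<ge> Dl \<and> rho s > eta1) else r j)" for j
  have sP: "s j \<ge> r j \<and> u (s j) = u (r j) \<and> Delta (s j) \<ge> Dl \<and> rho (s j) > eta1" if "P j" for j
  proof -
    have ex: "\<exists>s. s \<ge> r j \<and> u s = u (r j) \<and> Delta s \<ge> Dl \<and> rho s > eta1"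
      using claimB[OF L dD] that unfolding P_def Dl_def by blast
    have "s j = (SOME s. s \<ge> r j \<and> u s = u (r j) \<and> Delta s \<ge> Dl \<and> rho s > eta1)"
      using that by (simp add: s_def)
    then show ?thesis using someI_ex[OF ex] by simp
  qed
  have sge: "s j \<ge> j" for j
  proof -
    have "r j \<ge> j" by (rule seq_suble[OF r(1)])
    then show ?thesis using sP[of j] by (cases "P j") (auto simp: s_def)
  qed
  have evP: "eventually P sequentially"
  proof -
    have "eventually (\<lambda>j. dist ((u \<circ> r) j) ubar < \<delta>) sequentially" using r(2) dp by (simp add: tendsto_iff)
    moreover have "eventually (\<lambda>j. j \<ge> 1) sequentially" by (rule eventually_ge_at_top)
    ultimately show ?thesis
    proof eventually_elim
      case (elim j)
      then have "r j \<ge> 1" using seq_suble[OF r(1), of j] by simp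
      then show ?case using elim by (simp add: P_def dist_norm)
    qed
  qed
  have sinf: "filterlim s sequentially sequentially"
    by (rule filterlim_at_top_mono[OF filterlim_ident]) (simp add: sge)
  have dec0: "(\<lambda>j. f (u (s j)) - f (u (Suc (s j)))) \<longlonglongrightarrow> 0"
    using filterlim_compose[OF dec_to0 sinf] by (simp add: o_def)
  have g0: "(\<lambda>j. g (s j)) \<longlonglongrightarrow> 0"
    unfolding tendsto_iff
  proof (intro allI impI)
    fix e :: real assume e: "e > 0"
    define K where "K = eta1 * (mu / 2) * min (e * min Dmin (e / CH)) ((e * Dl) * min Dl ((e * Dl) / CH))"
    have Kp: "K > 0" using params e Dlp CH by (simp add: K_def)
    have "eventually (\<lambda>j. f (u (s j)) - f (u (Suc (s j))) < K \<and> P j) sequentially"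
      using order_tendstoD(2)[OF dec0 Kp] evP by (rule eventually_conj)
    then show "eventually (\<lambda>j. dist (g (s j)) 0 < e) sequentially"
    proof (rule eventually_mono)
      fix j assume a: "f (u (s j)) - f (u (Suc (s j))) < K \<and> P j"
      show "dist (g (s j)) 0 < e"
      proof (rule ccontr)
        assume "\<not> dist (g (s j)) 0 < e"
        then have ge: "norm (g (s j)) \<ge> e" by simp
        have "f (u (s j)) - f (u (Suc (s j))) \<ge> K"
          unfolding K_def using claimC[of "s j" Dl e] sP[of j] a Dlp ge e by simp
        with a show False by simp
      qed
    qed
  qed
  have us: "(\<lambda>j. u (s j)) \<longlonglongrightarrow> ubar"
  proof (rule Lim_transform_eventually[OF r(2)])
    show "eventually (\<lambda>j. (u \<circ> r) j = u (s j)) sequentially"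
      using evP by (rule eventually_mono) (simp add: sP)
  qed
  have "0 \<in> clarke_subdiff f ubar"
    unfolding clarke_subdiff_def
  proof (intro CollectI allI)
    fix h
    have "ereal 0 \<le> clarke_dd f ubar h"
    proof (rule clarke_usc[OF us])
      show "ereal (g (s j) \<bullet> h) \<le> clarke_dd f (u (s j)) h" for j
        using g_sub[of "s j"] by (simp add: clarke_subdiff_def)
      show "(\<lambda>j. g (s j) \<bullet> h) \<longlonglongrightarrow> 0" using tendsto_inner[OF g0 tendsto_const[of h]] by simp
    qed
    then show "ereal (0 \<bullet> h) \<le> clarke_dd f ubar h" by simp
  qed
  with ns show False by simp
qed

end

theorem corollary3p1:
  fixes J :: "(real^'m) \<times> (real^'n) \<Rightarrow> real"
    and Jy :: "(real^'m) \<times> (real^'n) \<Rightarrow> real^'m"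
    and Ju :: "(real^'m) \<times> (real^'n) \<Rightarrow> real^'n"
    and S :: "real^'n \<Rightarrow> real^'m"
    and dS :: "real^'n \<Rightarrow> real^'n \<Rightarrow> real^'m"
    and f :: "real^'n \<Rightarrow> real"
    and Gs :: "real^'n \<Rightarrow> real \<Rightarrow> (real^'n^'m) set"
    and Dmin eta1 eta2 beta1 beta2 mu CH :: real
    and u d g :: "nat \<Rightarrow> real^'n"
    and H :: "nat \<Rightarrow> real^'n^'n"
    and Delta rho :: "nat \<Rightarrow> real"
    and ubar :: "real^'n"
  assumes J_deriv: "\<And>z. (J has_derivative (\<lambda>(dy, du). Jy z \<bullet> dy + Ju z \<bullet> du)) (at z)"
    and Jy_cont: "continuous_on UNIV Jy"
    and Ju_cont: "continuous_on UNIV Ju"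
    and S_loclip: "\<And>x. \<exists>r>0. \<exists>L. L-lipschitz_on (cball x r) S"
    and S_dirdiff: "\<And>x h. ((\<lambda>t. (S (x + t *\<^sub>R h) - S x) /\<^sub>R t) \<longlongrightarrow> dS x h) (at_right 0)"
    and f_def: "f = (\<lambda>x. J (S x, x))"
    and Gs_ne: "\<And>x D. D > 0 \<Longrightarrow> Gs x D \<noteq> {}"
    and Gs_bdd: "\<And>x D. D > 0 \<Longrightarrow> bounded (Gs x D)"
    and G1: "\<And>x D. D > 0 \<Longrightarrow> (\<Union>\<xi>\<in>cball x D. bouligand S \<xi>) \<subseteq> Gs x D"
    and G2: "\<And>xs Ds x. xs \<longlonglongrightarrow> x \<Longrightarrow> Ds \<longlonglongrightarrow> 0 \<Longrightarrow> (\<forall>k. Ds k > 0) \<Longrightarrow>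
               0 \<notin> clarke_subdiff f x \<Longrightarrow>
               (\<lambda>k. SUP G\<in>Gs (xs k) (Ds k). INF W\<in>bouligand S x. mnorm (G - W)) \<longlonglongrightarrow> 0"
    and D_cond: "\<And>x h. \<exists>G\<in>bouligand S x. dS x h = G *v h"
    and params: "Dmin > 0" "0 < eta1" "eta1 < eta2" "eta2 < 1" "0 < beta1" "beta1 < 1"
                "1 < beta2" "0 < mu" "mu \<le> 1" "Delta 0 > Dmin"
    and g_sub: "\<And>k. g k \<in> clarke_subdiff f (u k)"
    and H_sym: "\<And>k. transpose (H k) = H k"
    and no_stop: "\<And>k. g k \<noteq> 0"
    and step_large: "\<And>k. Delta k \<ge> Dmin \<Longrightarrow>
          norm (d k) \<le> Delta k \<and>
          f (u k) - (f (u k) + g k \<bullet> d k + (1/2) * (d k \<bullet> (H k *v d k)))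
            \<ge> mu / 2 * norm (g k) * min_div (Delta k) (norm (g k)) (mnorm (H k)) \<and>
          rho k = (f (u k) - f (u k + d k)) /
                  (f (u k) - (f (u k) + g k \<bullet> d k + (1/2) * (d k \<bullet> (H k *v d k))))"
    and step_small: "\<And>k. Delta k < Dmin \<Longrightarrow>
          norm (d k) \<le> Delta k \<and>
          f (u k) - (f (u k) + model_phi Gs S Jy Ju (u k) (Delta k) (d k) + (1/2) * (d k \<bullet> (H k *v d k)))
            \<ge> mu / 2 * model_psi Gs S Jy Ju (u k) (Delta k)
                * min_div (Delta k) (model_psi Gs S Jy Ju (u k) (Delta k)) (mnorm (H k)) \<and>
          rho k = (if model_psi Gs S Jy Ju (u k) (Delta k) > norm (g k) * Delta k
                   then (f (u k) - f (u k + d k)) /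
                        (f (u k) - (f (u k) + model_phi Gs S Jy Ju (u k) (Delta k) (d k)
                                     + (1/2) * (d k \<bullet> (H k *v d k))))
                   else 0)"
    and u_upd: "\<And>k. u (Suc k) = (if rho k \<le> eta1 then u k else u k + d k)"
    and Delta_upd: "\<And>k. Delta (Suc k) = (if rho k \<le> eta1 then beta1 * Delta k
                        else if rho k \<le> eta2 then max Dmin (Delta k)
                        else max Dmin (beta2 * Delta k))"
    and CH: "CH > 0" "\<And>k. mnorm (H k) \<le> CH"
    and accum: "\<exists>r. strict_mono r \<and> (u \<circ> r) \<longlonglongrightarrow> ubar"
  shows "0 \<in> clarke_subdiff f ubar"
  proof -
  interpret tr J Jy Ju S dS f Gs Dmin eta1 eta2 beta1 beta2 mu CH u d g H Delta rho ubar
    by unfold_locales (fact assms)+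
  show ?thesis by (rule main)
qed

end
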